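(* Let $\mathbb K$ be a commutative semiring with $0\neq1$ and let $S:\mathrm{NW}(\Delta)\to K$ be regular. Then the text series $\Phi_\circ(S),\Phi_\bullet(S):\mathrm{TXT}(\Delta)\to K$ are regular, where for an injective $\Phi$, $\Phi(S)(\tau)=S(\Phi^{-1}(\tau))$ if $\tau$ is in the image of $\Phi$ and $\Phi(S)(\tau)=0$ otherwise.
   Context: Nested words: $\Delta$ finite alphabet. A nesting relation of width $n$ is a relation $\nu$ on $[n]$ with: $\nu(i,j)\Rightarrow i<j$; $\nu(i,j),\nu(i,j')\Rightarrow j=j'$ and $\nu(i,j),\nu(i',j)\Rightarrow i=i'$; $\nu(i,j),\nu(i',j'),i<i'\Rightarrow j<i'$ or $j'<j$. A nested word is $(w,\nu)$, $w=a_1\cdots a_n\in\Delta^+$, $\nu$ of width $n$; $\mathrm{NW}(\Delta)$ is their set. If $\nu(i,j)$, $i$ is a call and $j$ a return position; others are internal. Factor $nw[i,j]=(a_i\cdots a_j,\{(k-i+1,\ell-i+1):(k,\ell)\in\nu,i\le k,\ell\le j\})$. WNWA over $\mathbb K$: $\mathcal A=(Q,\iota,\delta_{call},\delta_{int},\delta_{ret},\kappa)$, $Q$ finite, $\delta_{call},\delta_{int}:Q\times\Delta\times Q\to K$, $\delta_{ret}:Q\times Q\times\Delta\times Q\to K$, $\iota,\kappa:Q\to K$. A run on $(a_1\cdots a_n,\nu)$ is $(q_0,\dots,q_n)$; the weight at $j$ is $\delta_{call}(q_{j-1},a_j,q_j)$ for a call $j$, $\delta_{int}(q_{j-1},a_j,q_j)$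 for internal $j$, $\delta_{ret}(q_{j-1},q_{i-1},a_j,q_j)$ if $\nu(i,j)$; the run's weight is the product. $\|\mathcal A\|(nw)=\sum_{(q_0..q_n)}\iota(q_0)\mathrm{wt}\,\kappa(q_n)$. A series $\mathrm{NW}(\Delta)\to K$ is regular if it is some $\|\mathcal A\|$. Texts: $(V,\lambda,\le_1,\le_2)$ with $V$ finite nonempty, $\lambda:V\to\Delta$, two linear orders, up to isomorphism. $\tau\circ\tau'$ (resp. $\tau\bullet\tau'$): disjoint union, all of $\tau$ before $\tau'$ in $\le_1$, and in $\le_2$ all of $\tau$ before $\tau'$ (resp. all of $\tau'$ before $\tau$). $\mathrm{TXT}(\Delta)$: texts generated from singletons by $\circ,\bullet$. WPA: $\mathcal A=(H,V,\Omega,\mu,\mu_{op},\mu_{cl},\lambda,\gamma)$, $H,V$ disjoint finite sets (horizontal, vertical states), $\Omega$ finite set of parentheses, $\mu:(H\times\Delta\times H)\cup(V\times\Delta\times V)\to K$, $\mu_{op},\mu_{cl}:(H\times\Omega\times V)\cup(V\times\Omega\times H)\to K$, $\lambda,\gamma:H\cup V\to K$. Runs (with label, weight, initial/final state) are defined inductively: (1) for $(q_1,q_2)\in(H\times H)\cup(V\times V)$, $a\in\Delta$, $(q_1,a,q_2)$ is a run with label $a$, weight $\mu(q_1,a,q_2)$, from $q_1$ to $q_2$; (2) if $r_1,r_2$ are runs with final state of $r_1$ = initial state of $r_2$ $=q$, then $r_1r_2$ is a run from the initial state of $r_1$ to the final state of $r_2$, weight the product, label $\mathrm{lab}(r_1)\circ\mathrm{lab}(r_2)$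 if $q\in H$ and $\mathrm{lab}(r_1)\bullet\mathrm{lab}(r_2)$ if $q\in V$; (3) if $r$ is a run obtained by rule (2), from $p_1$ to $p_2$, with $p_1\in H$ (resp. $V$), and $q_1,q_2\in V$ (resp. $H$), $s\in\Omega$, then $(q_1,(_s,p_1)\,r\,(p_2,)_s,q_2)$ is a run from $q_1$ to $q_2$ with label $\mathrm{lab}(r)$ and weight $\mu_{op}(q_1,s,p_1)\,\mathrm{wt}(r)\,\mu_{cl}(p_2,s,q_2)$. Behavior: $\|\mathcal A\|(\tau)=\sum_{q_1,q_2}\lambda(q_1)\sum_{r}\mathrm{wt}(r)\gamma(q_2)$ over runs from $q_1$ to $q_2$ with label $\tau$. A series $\mathrm{TXT}(\Delta)\to K$ is regular if it is some $\|\mathcal A\|$. Encodings: if $\nu=\emptyset$, $\Phi_\circ(nw)=a_1\circ\cdots\circ a_n$, $\Phi_\bullet(nw)=a_1\bullet\cdots\bullet a_n$; otherwise with $i$ the least call, $j$ its return, $nw'=nw[i+1,j-1]$, $nw''=nw[j+1,n]$: $\Phi_\circ(nw)=a_1\circ\cdots\circ a_{i-1}\circ(a_i\bullet\Phi_\bullet(nw')\bullet a_j)\circ\Phi_\circ(nw'')$, $\Phi_\bullet(nw)=a_1\bullet\cdots\bullet a_{i-1}\bullet(a_i\circ\Phi_\circ(nw')\circ a_j)\bullet\Phi_\bullet(nw'')$, omitting factors for empty intervals. Both maps are injective. *)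

theory Defs
  imports Main
begin

text \<open>A nested word is a pair (w, nu) with w a nonempty word, positions 1..length w,
  and nu a nesting relation on those positions.\<close>

type_synonym 'd nword = "'d list \<times> (nat \<times> nat) set"

definition nesting_rel :: "nat \<Rightarrow> (nat \<times> nat) set \<Rightarrow> bool" where
  "nesting_rel n \<nu> \<longleftrightarrow>
     \<nu> \<subseteq> {1..n} \<times> {1..n}
   \<and> (\<forall>i j. (i, j) \<in> \<nu> \<longrightarrow> i < j)
   \<and> (\<forall>i j j'. (i, j) \<in> \<nu> \<longrightarrow> (i, j') \<in> \<nu> \<longrightarrow> j = j')
   \<and> (\<forall>i i' j. (i, j) \<in> \<nu> \<longrightarrow> (i', j) \<in> \<nu> \<longrightarrow> i = i')
   \<and> (\<forall>i j i' j'. (i, j) \<in> \<nu> \<longrightarrow> (i', j') \<in> \<nu> \<longrightarrow> i < i' \<longrightarrow> j < i' \<or> j' < j)"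

definition is_nw :: "'d nword \<Rightarrow> bool" where
  "is_nw nw \<longleftrightarrow> fst nw \<noteq> [] \<and> nesting_rel (length (fst nw)) (snd nw)"

definition nw_factor :: "'d nword \<Rightarrow> nat \<Rightarrow> nat \<Rightarrow> 'd nword" where
  "nw_factor nw i j =
     (take (Suc j - i) (drop (i - 1) (fst nw)),
      {(k + 1 - i, l + 1 - i) | k l. (k, l) \<in> snd nw \<and> i \<le> k \<and> l \<le> j})"

record ('d, 'k) wnwa =
  nwa_Q :: "nat set"
  nwa_iota :: "nat \<Rightarrow> 'k"
  nwa_call :: "nat \<Rightarrow> 'd \<Rightarrow> nat \<Rightarrow> 'k"
  nwa_int :: "nat \<Rightarrow> 'd \<Rightarrow> nat \<Rightarrow> 'k"
  nwa_ret :: "nat \<Rightarrow> nat \<Rightarrow> 'd \<Rightarrow> nat \<Rightarrow> 'k"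
  nwa_kappa :: "nat \<Rightarrow> 'k"

definition wnwa_ok :: "('d, 'k) wnwa \<Rightarrow> bool" where
  "wnwa_ok A \<longleftrightarrow> finite (nwa_Q A)"

text \<open>Weight at position j (1-based) of the run qs = [q_0, ..., q_n].\<close>
definition wnwa_step :: "('d, 'k) wnwa \<Rightarrow> 'd nword \<Rightarrow> nat list \<Rightarrow> nat \<Rightarrow> 'k" where
  "wnwa_step A nw qs j =
    (if \<exists>k. (j, k) \<in> snd nw then nwa_call A (qs ! (j - 1)) (fst nw ! (j - 1)) (qs ! j)
     else if \<exists>i. (i, j) \<in> snd nw then
       nwa_ret A (qs ! (j - 1)) (qs ! ((THE i. (i, j) \<in> snd nw) - 1)) (fst nw ! (j - 1)) (qs ! j)
     else nwa_int A (qs ! (j - 1)) (fst nw ! (j - 1)) (qs ! j))"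

definition wnwa_beh :: "('d, 'k::comm_semiring_1) wnwa \<Rightarrow> 'd nword \<Rightarrow> 'k" where
  "wnwa_beh A nw =
    (\<Sum>qs \<in> {qs. length qs = Suc (length (fst nw)) \<and> set qs \<subseteq> nwa_Q A}.
       nwa_iota A (qs ! 0) * (\<Prod>j \<in> {1..length (fst nw)}. wnwa_step A nw qs j)
       * nwa_kappa A (qs ! length (fst nw)))"

definition regular_nw_series :: "('d nword \<Rightarrow> 'k::comm_semiring_1) \<Rightarrow> bool" where
  "regular_nw_series S \<longleftrightarrow>
     (\<exists>A :: ('d, 'k) wnwa. wnwa_ok A \<and> (\<forall>nw. is_nw nw \<longrightarrow> S nw = wnwa_beh A nw))"

text \<open>Canonical representative of the isomorphism class of a text (V, lambda, le1, le2):
  V is identified with {0..<n} enumerated along le1; the first component lists the labels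
  in le1-order, the second component lists the elements of V in le2-order (a permutation
  of [0..<n]).\<close>

type_synonym 'd tx = "'d list \<times> nat list"

definition tsing :: "'d \<Rightarrow> 'd tx" where
  "tsing a = ([a], [0])"

definition tcirc :: "'d tx \<Rightarrow> 'd tx \<Rightarrow> 'd tx" where
  "tcirc t u = (fst t @ fst u, snd t @ map (\<lambda>x. x + length (fst t)) (snd u))"

definition tbul :: "'d tx \<Rightarrow> 'd tx \<Rightarrow> 'd tx" where
  "tbul t u = (fst t @ fst u, map (\<lambda>x. x + length (fst t)) (snd u) @ snd t)"

inductive_set TXT :: "'d tx set" where
  sing: "tsing a \<in> TXT"
| circ: "t \<in> TXT \<Longrightarrow> u \<in> TXT \<Longrightarrow> tcirc t u \<in> TXT"
| bul: "t \<in> TXT \<Longrightarrow> u \<in> TXT \<Longrightarrow> tbul t u \<in> TXT"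

record ('d, 'k) wpa =
  pa_H :: "nat set"
  pa_V :: "nat set"
  pa_Om :: "nat set"
  pa_mu :: "nat \<Rightarrow> 'd \<Rightarrow> nat \<Rightarrow> 'k"
  pa_op :: "nat \<Rightarrow> nat \<Rightarrow> nat \<Rightarrow> 'k"
  pa_cl :: "nat \<Rightarrow> nat \<Rightarrow> nat \<Rightarrow> 'k"
  pa_lam :: "nat \<Rightarrow> 'k"
  pa_gam :: "nat \<Rightarrow> 'k"

definition wpa_ok :: "('d, 'k) wpa \<Rightarrow> bool" where
  "wpa_ok A \<longleftrightarrow> finite (pa_H A) \<and> finite (pa_V A) \<and> pa_H A \<inter> pa_V A = {} \<and> finite (pa_Om A)"

text \<open>A run is a sequence of top-level blocks: an atomic transition (q1, a, q2), or a
  bracketed run (q1, (_s, p1) r (p2, )_s, q2), where p1, p2 are the initial and final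
  state of the inner run r.\<close>
datatype 'd blk = Atm nat 'd nat | Brk nat nat "'d blk list" nat

fun bini :: "'d blk \<Rightarrow> nat" where
  "bini (Atm q1 a q2) = q1"
| "bini (Brk q1 s r q2) = q1"

fun bfin :: "'d blk \<Rightarrow> nat" where
  "bfin (Atm q1 a q2) = q2"
| "bfin (Brk q1 s r q2) = q2"

definition rini :: "'d blk list \<Rightarrow> nat" where "rini r = bini (hd r)"
definition rfin :: "'d blk list \<Rightarrow> nat" where "rfin r = bfin (last r)"

inductive wpa_run :: "('d, 'k) wpa \<Rightarrow> 'd blk list \<Rightarrow> bool" for A where
  atom: "(q1 \<in> pa_H A \<and> q2 \<in> pa_H A) \<or> (q1 \<in> pa_V A \<and> q2 \<in> pa_V A)
          \<Longrightarrow> wpa_run A [Atm q1 a q2]"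
| cat: "wpa_run A r1 \<Longrightarrow> wpa_run A r2 \<Longrightarrow> rfin r1 = rini r2 \<Longrightarrow> wpa_run A (r1 @ r2)"
| br: "wpa_run A r1 \<Longrightarrow> wpa_run A r2 \<Longrightarrow> rfin r1 = rini r2 \<Longrightarrow>
        (rini r1 \<in> pa_H A \<and> q1 \<in> pa_V A \<and> q2 \<in> pa_V A) \<or>
        (rini r1 \<in> pa_V A \<and> q1 \<in> pa_H A \<and> q2 \<in> pa_H A) \<Longrightarrow>
        s \<in> pa_Om A \<Longrightarrow> wpa_run A [Brk q1 s (r1 @ r2) q2]"

text \<open>Label: at a top-level junction state q the labels are combined by circ if q is
  horizontal, by bullet otherwise (all top-level junctions of a run have the same kind,
  and both operations are associative, so this agrees with the inductive definition).\<close>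
fun wpa_blab :: "('d, 'k) wpa \<Rightarrow> 'd blk \<Rightarrow> 'd tx"
and wpa_lab :: "('d, 'k) wpa \<Rightarrow> 'd blk list \<Rightarrow> 'd tx" where
  "wpa_blab A (Atm q1 a q2) = tsing a"
| "wpa_blab A (Brk q1 s r q2) = wpa_lab A r"
| "wpa_lab A [] = ([], [])"
| "wpa_lab A [b] = wpa_blab A b"
| "wpa_lab A (b # c # rs) =
     (if bfin b \<in> pa_H A then tcirc else tbul) (wpa_blab A b) (wpa_lab A (c # rs))"

fun wpa_bwt :: "('d, 'k::comm_semiring_1) wpa \<Rightarrow> 'd blk \<Rightarrow> 'k"
and wpa_wt :: "('d, 'k::comm_semiring_1) wpa \<Rightarrow> 'd blk list \<Rightarrow> 'k" where
  "wpa_bwt A (Atm q1 a q2) = pa_mu A q1 a q2"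
| "wpa_bwt A (Brk q1 s r q2) = pa_op A q1 s (rini r) * wpa_wt A r * pa_cl A (rfin r) s q2"
| "wpa_wt A [] = 1"
| "wpa_wt A (b # rs) = wpa_bwt A b * wpa_wt A rs"

definition wpa_beh :: "('d, 'k::comm_semiring_1) wpa \<Rightarrow> 'd tx \<Rightarrow> 'k" where
  "wpa_beh A \<tau> =
    (\<Sum>q1 \<in> pa_H A \<union> pa_V A. \<Sum>q2 \<in> pa_H A \<union> pa_V A.
       pa_lam A q1
       * (\<Sum>r \<in> {r. wpa_run A r \<and> rini r = q1 \<and> rfin r = q2 \<and> wpa_lab A r = \<tau>}. wpa_wt A r)
       * pa_gam A q2)"

definition regular_txt_series :: "('d tx \<Rightarrow> 'k::comm_semiring_1) \<Rightarrow> bool" where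
  "regular_txt_series T \<longleftrightarrow>
     (\<exists>A :: ('d, 'k) wpa. wpa_ok A \<and> (\<forall>\<tau> \<in> TXT. T \<tau> = wpa_beh A \<tau>))"

fun tfold :: "('d tx \<Rightarrow> 'd tx \<Rightarrow> 'd tx) \<Rightarrow> 'd tx list \<Rightarrow> 'd tx" where
  "tfold f [] = ([], [])"
| "tfold f [t] = t"
| "tfold f (t # u # ts) = f t (tfold f (u # ts))"

definition top :: "bool \<Rightarrow> 'd tx \<Rightarrow> 'd tx \<Rightarrow> 'd tx" where
  "top b = (if b then tcirc else tbul)"

function phi :: "bool \<Rightarrow> 'd nword \<Rightarrow> 'd tx" where
  "phi b nw =
    (if snd nw = {} then tfold (top b) (map tsing (fst nw))
     else
       (let i = (LEAST i. \<exists>j. (i, j) \<in> snd nw);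
            j = (THE j. (i, j) \<in> snd nw);
            n = length (fst nw)
        in if 1 \<le> i \<and> i < j \<and> j \<le> n then
             tfold (top b)
               (map tsing (take (i - 1) (fst nw))
                @ [tfold (top (\<not> b))
                     ([tsing (fst nw ! (i - 1))]
                      @ (if i + 1 \<le> j - 1 then [phi (\<not> b) (nw_factor nw (i + 1) (j - 1))] else [])
                      @ [tsing (fst nw ! (j - 1))])]
                @ (if j + 1 \<le> n then [phi b (nw_factor nw (j + 1) n)] else []))
           else ([], [])))"
  by pat_completeness auto
termination
  by (relation "measure (\<lambda>(b, nw). length (fst nw))") (auto simp: nw_factor_def)

definition Phi_circ :: "'d nword \<Rightarrow> 'd tx" where "Phi_circ = phi True"
definition Phi_bul :: "'d nword \<Rightarrow> 'd tx" where "Phi_bul = phi False"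

definition enc_series :: "('d nword \<Rightarrow> 'd tx) \<Rightarrow> ('d nword \<Rightarrow> 'k::zero) \<Rightarrow> 'd tx \<Rightarrow> 'k" where
  "enc_series \<Phi> S \<tau> =
     (if \<exists>nw. is_nw nw \<and> \<Phi> nw = \<tau> then S (THE nw. is_nw nw \<and> \<Phi> nw = \<tau>) else 0)"

end

theory Submission
  imports Defs "HOL-Library.Nat_Bijection"
begin


section \<open>Texts\<close>

lemma tcirc_assoc: "tcirc (tcirc t u) v = tcirc t (tcirc u v)"
  by (simp add: tcirc_def add.assoc)

lemma tbul_assoc: "tbul (tbul t u) v = tbul t (tbul u v)"
  by (simp add: tbul_def add.assoc)

lemma top_assoc: "top b (top b t u) v = top b t (top b u v)"
  by (simp add: top_def tcirc_assoc tbul_assoc)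

lemma tfold_Cons: "ts \<noteq> [] \<Longrightarrow> tfold f (t # ts) = f t (tfold f ts)"
  by (cases ts) auto

lemma tfold_append_top:
  "xs \<noteq> [] \<Longrightarrow> ys \<noteq> [] \<Longrightarrow> tfold (top b) (xs @ ys) = top b (tfold (top b) xs) (tfold (top b) ys)"
proof (induction xs)
  case (Cons x xs)
  then show ?case by (cases "xs = []") (auto simp: top_assoc tfold_Cons)
qed auto

lemma tfold_flat:
  "ys \<noteq> [] \<Longrightarrow> tfold (top b) (xs @ [tfold (top b) ys] @ zs) = tfold (top b) (xs @ ys @ zs)"
proof -
  assume ys: "ys \<noteq> []"
  have A: "tfold (top b) ([tfold (top b) ys] @ zs) = tfold (top b) (ys @ zs)"
    using ys by (cases "zs = []") (auto simp: tfold_append_top tfold_Cons)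
  show ?thesis
  proof (cases "xs = []")
    case True then show ?thesis using A by simp
  next
    case False
    then show ?thesis using A ys
      by (metis Cons_eq_appendI append_is_Nil_conv not_Cons_self2 tfold_append_top self_append_conv2)
  qed
qed

definition sw :: "'d tx \<Rightarrow> 'd tx" where "sw t = (fst t, rev (snd t))"

lemma sw_tcirc: "sw (tcirc t u) = tbul (sw t) (sw u)"
  by (simp add: sw_def tcirc_def tbul_def rev_map)

lemma sw_tbul: "sw (tbul t u) = tcirc (sw t) (sw u)"
  by (simp add: sw_def tcirc_def tbul_def rev_map)

lemma sw_top: "sw (top b t u) = top (\<not> b) (sw t) (sw u)"
  by (simp add: top_def sw_tcirc sw_tbul)

lemma sw_tsing[simp]: "sw (tsing a) = tsing a"
  by (simp add: sw_def tsing_def)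

lemma sw_sw[simp]: "sw (sw t) = t"
  by (simp add: sw_def)

lemma sw_tfold: "ts \<noteq> [] \<Longrightarrow> sw (tfold (top b) ts) = tfold (top (\<not> b)) (map sw ts)"
proof (induction ts)
  case (Cons t ts)
  then show ?case by (cases "ts = []") (auto simp: sw_top tfold_Cons)
qed auto



section \<open>Forests\<close>

datatype 'd node = I 'd | C 'd "'d node list" 'd

fun ln :: "'d node \<Rightarrow> nat" and lf :: "'d node list \<Rightarrow> nat" where
  "ln (I a) = 1"
| "ln (C a g c) = lf g + 2"
| "lf [] = 0"
| "lf (x # f) = ln x + lf f"

lemma ln_pos: "ln x \<ge> 1"
  by (cases x) auto

lemma lf_0_iff: "lf f = 0 \<longleftrightarrow> f = []"
proof (cases f)
  case (Cons a l) then show ?thesis using ln_pos[of a] by simp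
qed simp

fun phin :: "bool \<Rightarrow> 'd node \<Rightarrow> 'd tx" and phit :: "bool \<Rightarrow> 'd node list \<Rightarrow> 'd tx" where
  "phin b (I a) = tsing a"
| "phin b (C a g c) = tfold (top (\<not> b)) ([tsing a] @ (if g = [] then [] else [phit (\<not> b) g]) @ [tsing c])"
| "phit b f = tfold (top b) (map (phin b) f)"

declare phit.simps[simp del]

lemma phit_Cons: "f \<noteq> [] \<Longrightarrow> phit b (x # f) = top b (phin b x) (phit b f)"
  by (cases f) (auto simp: phit.simps)

lemma phit_single[simp]: "phit b [x] = phin b x"
  by (simp add: phit.simps)

lemma sw_phi: fixes x :: "'d node" and f :: "'d node list" shows "sw (phin b x) = phin (\<not> b) x" "f \<noteq> [] \<Longrightarrow> sw (phit b f) = phit (\<not> b) f"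
proof (induction b x and b f rule: phin_phit.induct)
  case (1 b a) then show ?case by simp
next
  case (2 b a g c)
  then show ?case by (auto simp: sw_tfold)
next
  case (3 b f)
  have m: "map (sw \<circ> phin b) f = map (phin (\<not> b)) f" using 3 by auto
  have "sw (phit b f) = tfold (top (\<not> b)) (map (sw \<circ> phin b) f)"
    using 3 by (simp add: phit.simps sw_tfold)
  then show ?case using 3 m by (simp add: phit.simps)
qed

definition wd :: "'d tx \<Rightarrow> nat" where "wd t = length (fst t)"

lemma len_top: "length (fst (top b x y)) = length (fst x) + length (fst y)"
  "length (snd (top b x y)) = length (snd x) + length (snd y)"
  by (auto simp: top_def tcirc_def tbul_def)

lemma len_tfold: "length (fst (tfold (top b) ts)) = sum_list (map (length \<circ> fst) ts)
   \<and> length (snd (tfold (top b) ts)) = sum_list (map (length \<circ> snd) ts)"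
proof (induction ts)
  case (Cons t ts)
  then show ?case by (cases "ts = []") (simp_all add: tfold_Cons len_top)
qed simp

lemma lf_sum: "lf f = sum_list (map ln f)"
  by (induction f) auto

lemma len_phi: fixes x :: "'d node" and f :: "'d node list" shows "length (fst (phin b x)) = ln x \<and> length (snd (phin b x)) = ln x"
  "length (fst (phit b f)) = lf f \<and> length (snd (phit b f)) = lf f"
proof (induction b x and b f rule: phin_phit.induct)
  case (1 b a) then show ?case by (simp add: tsing_def)
next
  case (2 b a g c)
  then show ?case by (cases "g = []") (auto simp: top_def tcirc_def tbul_def tsing_def)
next
  case (3 b f)
  have m: "map (length \<circ> fst \<circ> phin b) f = map ln f" "map (length \<circ> snd \<circ> phin b) f = map ln f"
    using 3 by auto
  have "length (fst (phit b f)) = sum_list (map (length \<circ> fst \<circ> phin b) f)"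
       "length (snd (phit b f)) = sum_list (map (length \<circ> snd \<circ> phin b) f)"
    by (simp_all add: phit.simps len_tfold map_map)
  then show ?case using m by (simp add: lf_sum)
qed

lemma snd_phin_C:
  "snd (phin True (C a g c)) = (if g = [] then [1, 0] else (lf g + 1) # map Suc (snd (phit False g)) @ [0])"
  by (auto simp: top_def tbul_def tsing_def len_phi)

lemma fst_phin_C:
  "fst (phin True (C a g c)) = (if g = [] then [a, c] else a # fst (phit False g) @ [c])"
  by (auto simp: top_def tbul_def tsing_def len_phi)

lemma hd_snd_phin: "snd (phin True x) \<noteq> [] \<and> hd (snd (phin True x)) = ln x - 1"
proof (cases x)
  case (C a g c)
  then show ?thesis by (simp only: snd_phin_C) (simp add: len_phi)
qed (simp add: tsing_def)

lemma phit_inj_aux: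
  "\<forall>f1 f2. lf f1 = n \<longrightarrow> f1 \<noteq> [] \<longrightarrow> f2 \<noteq> [] \<longrightarrow> phit True f1 = phit True f2 \<longrightarrow> f1 = f2"
proof (induction n rule: less_induct)
  case (less n)
  have IH: "f1 = f2" if "lf f1 < n" "f1 \<noteq> []" "f2 \<noteq> []" "phit True f1 = phit True f2" for f1 f2 :: "'a node list"
    using less.IH[OF that(1), rule_format, of f1 f2] that by simp
  show ?case
  proof (intro allI impI)
    fix f1 f2 :: "'a node list"
    assume n: "lf f1 = n" and ne: "f1 \<noteq> []" "f2 \<noteq> []" and eq: "phit True f1 = phit True f2"
    obtain x1 r1 where f1: "f1 = x1 # r1" using ne by (cases f1) auto
    obtain x2 r2 where f2: "f2 = x2 # r2" using ne by (cases f2) auto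
    have split: "\<And>x r. phit True (x # r) = (if r = [] then phin True x else tcirc (phin True x) (phit True r))"
      by (auto simp: phit_Cons top_def)
    have hd1: "hd (snd (phit True (x # r))) = ln x - 1" for x :: "'a node" and r
      using hd_snd_phin[of x] by (auto simp: split tcirc_def)
    from eq have "ln x1 - 1 = ln x2 - 1" using hd1[of x1 r1] hd1[of x2 r2] f1 f2 by simp
    hence lnx: "ln x1 = ln x2" using ln_pos[of x1] ln_pos[of x2] by linarith
    have tk: "phin True x = (take (ln x) (fst (phit True (x # r))), take (ln x) (snd (phit True (x # r))))"
      for x :: "'a node" and r
      using len_phi(1)[of True x] by (cases "phin True x") (auto simp: split tcirc_def)
    have nodeq: "phin True x1 = phin True x2"
      using tk[of x1 r1] tk[of x2 r2] eq f1 f2 lnx by simp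
    have lfeq: "lf f1 = lf f2" using eq len_phi(2)[of True f1] len_phi(2)[of True f2] by simp
    have r12: "r1 = [] \<longleftrightarrow> r2 = []" using lfeq lnx f1 f2 by (auto simp: lf_0_iff)
    have x12: "x1 = x2"
    proof (cases x1)
      case (I a)
      then show ?thesis using nodeq lnx by (cases x2) (auto simp: tsing_def)
    next
      case (C a g c)
      then obtain a' g' c' where x2: "x2 = C a' g' c'" using lnx by (cases x2) auto
      have lg: "lf g = lf g'" using lnx C x2 by simp
      have gg: "g = [] \<longleftrightarrow> g' = []" using lg by (auto simp: lf_0_iff)
      have nq: "phin True (C a g c) = phin True (C a' g' c')"
        using nodeq C x2 by (simp del: phin.simps)
      have fe: "fst (phin True (C a g c)) = fst (phin True (C a' g' c'))"
          "snd (phin True (C a g c)) = snd (phin True (C a' g' c'))"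
        using nq by (simp_all del: phin.simps)
      show ?thesis
      proof (cases "g = []")
        case True
        then show ?thesis using fe gg C x2 by (auto simp del: phin.simps simp: fst_phin_C)
      next
        case False
        hence ng': "g' \<noteq> []" using gg by simp
        have 1: "a = a' \<and> c = c' \<and> fst (phit False g) = fst (phit False g')"
          using fe(1) C x2 False ng' len_phi(2)[of False g] len_phi(2)[of False g'] lg
          by (auto simp del: phin.simps simp: fst_phin_C len_phi)
        have "map Suc (snd (phit False g)) = map Suc (snd (phit False g'))"
          using fe(2) C x2 False ng' by (auto simp del: phin.simps simp: snd_phin_C)
        hence 2: "snd (phit False g) = snd (phit False g')"
          by (simp add: inj_map_eq_map)
        have "phit False g = phit False g'" using 1 2 by (simp add: prod_eq_iff)
        hence "sw (phit False g) = sw (phit False g')" by simp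
        hence "phit True g = phit True g'" using sw_phi(2)[of g False] sw_phi(2)[of g' False] False ng' by simp
        moreover have "lf g < n" using n f1 C by simp
        ultimately have "g = g'" using IH False ng' by blast
        then show ?thesis using 1 C x2 by simp
      qed
    qed
    show "f1 = f2"
    proof (cases "r1 = []")
      case True
      then show ?thesis using r12 f1 f2 x12 by simp
    next
      case False
      hence nr2: "r2 \<noteq> []" using r12 by simp
      have "phit True r1 = phit True r2"
      proof -
        have e: "tcirc (phin True x1) (phit True r1) = tcirc (phin True x1) (phit True r2)"
          using eq f1 f2 False nr2 x12 by (simp add: split)
        then have "fst (phit True r1) = fst (phit True r2)" by (simp add: tcirc_def)
        moreover from e have "map (\<lambda>x. x + length (fst (phin True x1))) (snd (phit True r1))
              = map (\<lambda>x. x + length (fst (phin True x1))) (snd (phit True r2))"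
          by (simp add: tcirc_def)
        hence "snd (phit True r1) = snd (phit True r2)"
          by (simp add: inj_map_eq_map inj_on_def)
        ultimately show ?thesis by (simp add: prod_eq_iff)
      qed
      moreover have "lf r1 < n" using n f1 ln_pos[of x1] by simp
      ultimately have "r1 = r2" using IH False nr2 by blast
      then show ?thesis using f1 f2 x12 by simp
    qed
  qed
qed

lemma phit_inj:
  assumes ne: "f1 \<noteq> []" "f2 \<noteq> []" and e: "phit b f1 = phit b f2"
  shows "f1 = f2"
proof -
  have T: "phit True f1 = phit True f2"
  proof (cases b)
    case False
    have "sw (phit b f1) = sw (phit b f2)" using e by simp
    then show ?thesis using sw_phi(2)[of f1 b] sw_phi(2)[of f2 b] ne False by simp
  qed (use e in simp)
  show ?thesis using phit_inj_aux[rule_format, OF refl ne T] .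
qed



definition sh :: "nat \<Rightarrow> (nat \<times> nat) set \<Rightarrow> (nat \<times> nat) set" where
  "sh k v = (\<lambda>(i, j). (i + k, j + k)) ` v"

definition R :: "nat \<Rightarrow> nat \<Rightarrow> (nat \<times> nat) set \<Rightarrow> (nat \<times> nat) set" where
  "R a b v = (\<lambda>(i, j). (i - a, j - a)) ` {(i, j) \<in> v. a < i \<and> a < j \<and> j \<le> b}"

lemma mem_sh: "(i, j) \<in> sh k v \<longleftrightarrow> k \<le> i \<and> k \<le> j \<and> (i - k, j - k) \<in> v"
proof
  assume "(i, j) \<in> sh k v"
  then obtain i' j' where "(i', j') \<in> v" "i = i' + k" "j = j' + k" by (auto simp: sh_def)
  then show "k \<le> i \<and> k \<le> j \<and> (i - k, j - k) \<in> v" by simp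
next
  assume a: "k \<le> i \<and> k \<le> j \<and> (i - k, j - k) \<in> v"
  hence "(i, j) = (\<lambda>(i, j). (i + k, j + k)) (i - k, j - k)" by simp
  then show "(i, j) \<in> sh k v" unfolding sh_def using a by blast
qed

lemma mem_sh': "(i + k, j + k) \<in> sh k v \<longleftrightarrow> (i, j) \<in> v"
  by (simp add: mem_sh)

lemma mem_R: "(i, j) \<in> R a b v \<longleftrightarrow> 0 < i \<and> 0 < j \<and> j + a \<le> b \<and> (i + a, j + a) \<in> v"
proof
  assume "(i, j) \<in> R a b v"
  then obtain i' j' where "(i', j') \<in> v" "a < i'" "a < j'" "j' \<le> b" "i = i' - a" "j = j' - a" by (auto simp: R_def)
  then show "0 < i \<and> 0 < j \<and> j + a \<le> b \<and> (i + a, j + a) \<in> v" by simp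
next
  assume a: "0 < i \<and> 0 < j \<and> j + a \<le> b \<and> (i + a, j + a) \<in> v"
  hence "(i, j) = (\<lambda>(i, j). (i - a, j - a)) (i + a, j + a)" by simp
  then show "(i, j) \<in> R a b v" unfolding R_def using a by force
qed

lemma nr_sub: "nesting_rel n v \<Longrightarrow> (i, j) \<in> v \<Longrightarrow> 1 \<le> i \<and> i < j \<and> j \<le> n"
  unfolding nesting_rel_def by auto

lemma nr_empty: "nesting_rel n {}"
  by (simp add: nesting_rel_def)

lemma nr_cat:
  assumes A: "nesting_rel n1 v1" and B: "nesting_rel n2 v2"
  shows "nesting_rel (n1 + n2) (v1 \<union> sh n1 v2)"
proof -
  note a = A[unfolded nesting_rel_def] and b = B[unfolded nesting_rel_def]
  have D: "((i,j) \<in> v1 \<and> 1 \<le> i \<and> i < j \<and> j \<le> n1) \<or> (n1 < i \<and> i < j \<and> (i - n1, j - n1) \<in> v2 \<and> j \<le> n1 + n2)"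
    if "(i, j) \<in> v1 \<union> sh n1 v2" for i j
    using that nr_sub[OF A, of i j] nr_sub[OF B, of "i - n1" "j - n1"] by (auto simp: mem_sh)
  show ?thesis unfolding nesting_rel_def
  proof (intro conjI allI impI subsetI)
    fix x assume "x \<in> v1 \<union> sh n1 v2"
    then obtain i j where x: "x = (i, j)" "(i, j) \<in> v1 \<union> sh n1 v2" by (cases x) auto
    show "x \<in> {1..n1 + n2} \<times> {1..n1 + n2}" using D[OF x(2)] x(1) by auto
  next
    fix i j assume "(i, j) \<in> v1 \<union> sh n1 v2" then show "i < j" using D by blast
  next
    fix i j j' assume h: "(i, j) \<in> v1 \<union> sh n1 v2" "(i, j') \<in> v1 \<union> sh n1 v2"
    show "j = j'" using D[OF h(1)] D[OF h(2)] a b[THEN conjunct2, THEN conjunct2, THEN conjunct1, rule_format, of "i - n1" "j - n1" "j' - n1"]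
      by auto
  next
    fix i i' j assume h: "(i, j) \<in> v1 \<union> sh n1 v2" "(i', j) \<in> v1 \<union> sh n1 v2"
    show "i = i'" using D[OF h(1)] D[OF h(2)] a b[THEN conjunct2, THEN conjunct2, THEN conjunct2, THEN conjunct1, rule_format, of "i - n1" "j - n1" "i' - n1"]
      by auto
  next
    fix i j i' j' assume h: "(i, j) \<in> v1 \<union> sh n1 v2" "(i', j') \<in> v1 \<union> sh n1 v2" and lt: "i < i'"
    have b5: "(i - n1, j - n1) \<in> v2 \<longrightarrow> (i' - n1, j' - n1) \<in> v2 \<longrightarrow> i - n1 < i' - n1 \<longrightarrow> j - n1 < i' - n1 \<or> j' - n1 < j - n1"
      using b by blast
    have a5: "(i, j) \<in> v1 \<longrightarrow> (i', j') \<in> v1 \<longrightarrow> i < i' \<longrightarrow> j < i' \<or> j' < j"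
      using a by blast
    show "j < i' \<or> j' < j" using D[OF h(1)] D[OF h(2)] lt a5 b5
      by auto
  qed
qed

lemma nr_wrap:
  assumes A: "nesting_rel n v"
  shows "nesting_rel (n + 2) (insert (1, n + 2) (sh 1 v))"
proof -
  note a = A[unfolded nesting_rel_def]
  have D: "(i = 1 \<and> j = n + 2) \<or> (1 < i \<and> i < j \<and> (i - 1, j - 1) \<in> v \<and> j \<le> n + 1)"
    if "(i, j) \<in> insert (1, n + 2) (sh 1 v)" for i j
    using that nr_sub[OF A, of "i - 1" "j - 1"] by (auto simp: mem_sh)
  show ?thesis unfolding nesting_rel_def
  proof (intro conjI allI impI subsetI)
    fix x assume "x \<in> insert (1, n + 2) (sh 1 v)"
    then obtain i j where x: "x = (i, j)" "(i, j) \<in> insert (1, n + 2) (sh 1 v)" by (cases x) auto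
    show "x \<in> {1..n + 2} \<times> {1..n + 2}" using D[OF x(2)] x(1) by auto
  next
    fix i j assume "(i, j) \<in> insert (1, n + 2) (sh 1 v)" then show "i < j" using D by fastforce
  next
    fix i j j' assume h: "(i, j) \<in> insert (1, n + 2) (sh 1 v)" "(i, j') \<in> insert (1, n + 2) (sh 1 v)"
    show "j = j'" using D[OF h(1)] D[OF h(2)] a[THEN conjunct2, THEN conjunct2, THEN conjunct1, rule_format, of "i - 1" "j - 1" "j' - 1"]
      by auto
  next
    fix i i' j assume h: "(i, j) \<in> insert (1, n + 2) (sh 1 v)" "(i', j) \<in> insert (1, n + 2) (sh 1 v)"
    show "i = i'" using D[OF h(1)] D[OF h(2)] a[THEN conjunct2, THEN conjunct2, THEN conjunct2, THEN conjunct1, rule_format, of "i - 1" "j - 1" "i' - 1"]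
      by auto
  next
    fix i j i' j' assume h: "(i, j) \<in> insert (1, n + 2) (sh 1 v)" "(i', j') \<in> insert (1, n + 2) (sh 1 v)" and lt: "i < i'"
    have a5: "(i - 1, j - 1) \<in> v \<longrightarrow> (i' - 1, j' - 1) \<in> v \<longrightarrow> i - 1 < i' - 1 \<longrightarrow> j - 1 < i' - 1 \<or> j' - 1 < j - 1"
      using a by blast
    show "j < i' \<or> j' < j" using D[OF h(1)] D[OF h(2)] lt a5
      by auto
  qed
qed

lemma nr_R:
  assumes A: "nesting_rel n v"
  shows "nesting_rel (b - a) (R a b v)"
proof -
  note a = A[unfolded nesting_rel_def]
  show ?thesis unfolding nesting_rel_def
  proof (intro conjI allI impI subsetI)
    fix x assume "x \<in> R a b v"
    then obtain i j where x: "x = (i, j)" "(i, j) \<in> R a b v" by (cases x) auto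
    then have "0 < i" "0 < j" "j + a \<le> b" "(i + a, j + a) \<in> v" by (auto simp: mem_R)
    moreover have "i + a < j + a" using a calculation(4) by blast
    ultimately show "x \<in> {1..b - a} \<times> {1..b - a}" using x by auto
  next
    fix i j assume "(i, j) \<in> R a b v" then show "i < j" using a[THEN conjunct2, THEN conjunct1, rule_format, of "i + a" "j + a"] by (auto simp: mem_R)
  next
    fix i j j' assume "(i, j) \<in> R a b v" "(i, j') \<in> R a b v"
    then show "j = j'" using a[THEN conjunct2, THEN conjunct2, THEN conjunct1, rule_format, of "i + a" "j + a" "j' + a"] by (auto simp: mem_R)
  next
    fix i i' j assume "(i, j) \<in> R a b v" "(i', j) \<in> R a b v"
    then show "i = i'" using a[THEN conjunct2, THEN conjunct2, THEN conjunct2, THEN conjunct1, rule_format, of "i + a" "j + a" "i' + a"] by (auto simp: mem_R)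
  next
    fix i j i' j' assume "(i, j) \<in> R a b v" "(i', j') \<in> R a b v" "i < i'"
    then show "j < i' \<or> j' < j" using a[THEN conjunct2, THEN conjunct2, THEN conjunct2, THEN conjunct2, rule_format, of "i + a" "j + a" "i' + a" "j' + a"] by (auto simp: mem_R)
  qed
qed



fun fln :: "'d node \<Rightarrow> 'd nword" and fll :: "'d node list \<Rightarrow> 'd nword" where
  "fln (I a) = ([a], {})"
| "fln (C a g c) = (a # fst (fll g) @ [c], insert (1, length (fst (fll g)) + 2) (sh 1 (snd (fll g))))"
| "fll [] = ([], {})"
| "fll (x # f) = (fst (fln x) @ fst (fll f), snd (fln x) \<union> sh (length (fst (fln x))) (snd (fll f)))"

lemma len_fl: fixes x :: "'d node" and f :: "'d node list"
  shows "length (fst (fln x)) = ln x" "length (fst (fll f)) = lf f"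
  by (induction x and f rule: fln_fll.induct) auto

lemma nr_fl: fixes x :: "'d node" and f :: "'d node list"
  shows "nesting_rel (ln x) (snd (fln x))" "nesting_rel (lf f) (snd (fll f))"
proof (induction x and f rule: fln_fll.induct)
  case (1 a) then show ?case by (simp add: nr_empty)
next
  case (2 a g c) then show ?case using nr_wrap[of "lf g" "snd (fll g)"] by (simp add: len_fl)
next
  case 3 then show ?case by (simp add: nr_empty)
next
  case (4 x f) then show ?case using nr_cat[of "ln x" "snd (fln x)" "lf f" "snd (fll f)"] by (simp add: len_fl)
qed

lemma sh_0[simp]: "sh 0 v = v" by (simp add: sh_def)
lemma sh_empty[simp]: "sh k {} = {}" by (simp add: sh_def)
lemma sh_union: "sh k (A \<union> B) = sh k A \<union> sh k B" by (simp add: sh_def image_Un)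
lemma sh_insert: "sh k (insert (i, j) A) = insert (i + k, j + k) (sh k A)" by (simp add: sh_def)
lemma sh_sh: "sh a (sh b v) = sh (b + a) v"
  by (auto simp: set_eq_iff mem_sh split_paired_all add.commute)

lemma fll_append: "fll (f1 @ f2) = (fst (fll f1) @ fst (fll f2), snd (fll f1) \<union> sh (lf f1) (snd (fll f2)))"
  by (induction f1) (auto simp: sh_union sh_sh len_fl add.commute)

lemma fll_mapI: "fll (map I ws) = (ws, {})"
  by (induction ws) auto

lemma is_nw_fll: "f \<noteq> [] \<Longrightarrow> is_nw (fll f)"
proof -
  assume "f \<noteq> []"
  then have "fst (fll f) \<noteq> []" using len_fl(2)[of f] lf_0_iff[of f] by auto
  then show ?thesis unfolding is_nw_def len_fl using nr_fl(2)[of f] by simp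
qed

section \<open>Every nested word comes from a forest\<close>

lemma fll_surj_aux:
  "\<forall>w v. length w = n \<longrightarrow> nesting_rel n v \<longrightarrow> (\<exists>f. fll f = (w, v))"
proof (induction n rule: less_induct)
  case (less n)
  have IH: "\<exists>f. fll f = (w, v)" if "length w < n" "nesting_rel (length w) v" for w :: "'a list" and v
    using less.IH[OF that(1), rule_format, of w v] that by simp
  show ?case
  proof (intro allI impI)
    fix w :: "'a list" and v
    assume lw: "length w = n" and nr: "nesting_rel n v"
    note nra = nr[unfolded nesting_rel_def]
    show "\<exists>f. fll f = (w, v)"
    proof (cases w)
      case Nil
      then have "v = {}" using nr lw by (auto simp: nesting_rel_def)
      then show ?thesis using Nil by (intro exI[of _ "[]"]) simp
    next
      case (Cons a w')
      show ?thesis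
      proof (cases "\<exists>j. (1, j) \<in> v")
        case False
        have veq: "v = sh 1 (R 1 n v)"
        proof (rule set_eqI, clarify)
          fix i j
          show "(i, j) \<in> v \<longleftrightarrow> (i, j) \<in> sh 1 (R 1 n v)"
          proof
            assume h: "(i, j) \<in> v"
            then have "1 \<le> i" "i < j" "j \<le> n" using nr_sub[OF nr] by auto
            moreover have "i \<noteq> 1" using False h by auto
            ultimately show "(i, j) \<in> sh 1 (R 1 n v)" using h by (simp add: mem_sh mem_R)
          next
            assume "(i, j) \<in> sh 1 (R 1 n v)"
            then show "(i, j) \<in> v" by (auto simp: mem_sh mem_R)
          qed
        qed
        have "nesting_rel (n - 1) (R 1 n v)" by (rule nr_R[OF nr])
        moreover have "length w' = n - 1" using lw Cons by simp
        ultimately obtain f' where f': "fll f' = (w', R 1 n v)"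
          using IH[of w' "R 1 n v"] lw Cons by auto
        have "fll (I a # f') = (w, v)" by (subst veq) (simp add: f' Cons)
        then show ?thesis by (rule exI)
      next
        case True
        then obtain j where j: "(1, j) \<in> v" by auto
        have j2: "2 \<le> j" "j \<le> n" using nr_sub[OF nr j] by auto
        define wg where "wg = take (j - 2) w'"
        define c where "c = w' ! (j - 2)"
        define wf where "wf = drop (j - 1) w'"
        have lw': "length w' = n - 1" using lw Cons by simp
        have wsplit: "w' = wg @ [c] @ wf"
        proof -
          have "j - 2 < length w'" using j2 lw' by simp
          from id_take_nth_drop[OF this] have "w' = take (j - 2) w' @ w' ! (j - 2) # drop (Suc (j - 2)) w'" .
          moreover have "Suc (j - 2) = j - 1" using j2 by simp
          ultimately show ?thesis unfolding wg_def c_def wf_def by simp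
        qed
        have lwg: "length wg = j - 2" unfolding wg_def using j2 lw' by simp
        have lwf: "length wf = n - j" unfolding wf_def using j2 lw' by simp
        have veq: "v = insert (1, j) (sh 1 (R 1 (j - 1) v)) \<union> sh j (R j n v)"
        proof (rule set_eqI, clarify)
          fix i l
          show "(i, l) \<in> v \<longleftrightarrow> (i, l) \<in> insert (1, j) (sh 1 (R 1 (j - 1) v)) \<union> sh j (R j n v)"
          proof
            assume h: "(i, l) \<in> v"
            have r: "1 \<le> i" "i < l" "l \<le> n" using nr_sub[OF nr h] by auto
            show "(i, l) \<in> insert (1, j) (sh 1 (R 1 (j - 1) v)) \<union> sh j (R j n v)"
            proof (cases "i = 1")
              case True
              then have h1: "(1, l) \<in> v" using h by simp
              have "\<forall>i j j'. (i, j) \<in> v \<longrightarrow> (i, j') \<in> v \<longrightarrow> j = j'" using nra by (elim conjE)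
              then have "l = j" using h1 j by blast
              then show ?thesis using True by simp
            next
              case False
              have f5: "\<forall>i j i' j'. (i, j) \<in> v \<longrightarrow> (i', j') \<in> v \<longrightarrow> i < i' \<longrightarrow> j < i' \<or> j' < j"
                using nra by (elim conjE)
              have "1 < i" using False r(1) by simp
              then have "j < i \<or> l < j" using f5 j h by blast
              then show ?thesis using r h False by (auto simp: mem_sh mem_R)
            qed
          next
            assume "(i, l) \<in> insert (1, j) (sh 1 (R 1 (j - 1) v)) \<union> sh j (R j n v)"
            then show "(i, l) \<in> v" using j by (auto simp: mem_sh mem_R)
          qed
        qed
        have A: "nesting_rel (j - 1 - 1) (R 1 (j - 1) v)" by (rule nr_R[OF nr])
        have "j - 1 - 1 = length wg" using lwg by simp
        with A have "nesting_rel (length wg) (R 1 (j - 1) v)" by simp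
        moreover have "length wg < n" using lwg j2 by simp
        ultimately obtain g where g: "fll g = (wg, R 1 (j - 1) v)"
          using IH[of wg "R 1 (j - 1) v"] by blast
        have B: "nesting_rel (n - j) (R j n v)" by (rule nr_R[OF nr])
        then have "nesting_rel (length wf) (R j n v)" using lwf by simp
        moreover have "length wf < n" using lwf j2 by simp
        ultimately obtain f'' where f'': "fll f'' = (wf, R j n v)"
          using IH[of wf "R j n v"] by blast
        have "fll (C a g c # f'') = (w, v)"
        proof -
          have e: "Suc (Suc (length wg)) = j" using lwg j2 by simp
          have "fll (C a g c # f'') = (a # wg @ [c] @ wf, insert (1, j) (sh 1 (R 1 (j - 1) v)) \<union> sh j (R j n v))"
            by (simp add: g f'' e)
          then show ?thesis using Cons wsplit veq[symmetric] by simp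
        qed
        then show ?thesis by (rule exI)
      qed
    qed
  qed
qed

lemma fll_surj: "is_nw nw \<Longrightarrow> \<exists>f. f \<noteq> [] \<and> fll f = nw"
  using fll_surj_aux[rule_format, of "fst nw" "length (fst nw)" "snd nw"]
  by (auto simp: is_nw_def) (metis fll.simps(1) fst_conv)



lemma forest_decomp: "\<exists>ws rest. f = map I ws @ rest \<and> (rest = [] \<or> (\<exists>a g c f''. rest = C a g c # f''))"
proof (induction f)
  case Nil then show ?case by auto
next
  case (Cons x f)
  show ?case
  proof (cases x)
    case (I a)
    from Cons obtain ws rest where "f = map I ws @ rest" "rest = [] \<or> (\<exists>a g c f''. rest = C a g c # f'')" by blast
    then show ?thesis using I by (intro exI[of _ "a # ws"] exI[of _ rest]) auto
  next
    case (C a g c)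
    then show ?thesis by (intro exI[of _ "[]"] exI[of _ "x # f"]) auto
  qed
qed

lemma lf_mapI: "lf (map I ws) = length ws"
  by (induction ws) auto

lemma factor_R:
  assumes "1 \<le> i" "\<forall>k l. (k, l) \<in> v \<longrightarrow> k < l"
  shows "nw_factor (w, v) i j = (take (Suc j - i) (drop (i - 1) w), R (i - 1) j v)"
proof -
  have "{(k + 1 - i, l + 1 - i) | k l. (k, l) \<in> v \<and> i \<le> k \<and> l \<le> j} = R (i - 1) j v"
  proof (rule set_eqI, clarify)
    fix x y
    show "(x, y) \<in> {(k + 1 - i, l + 1 - i) | k l. (k, l) \<in> v \<and> i \<le> k \<and> l \<le> j} \<longleftrightarrow> (x, y) \<in> R (i - 1) j v"
    proof
      assume "(x, y) \<in> {(k + 1 - i, l + 1 - i) | k l. (k, l) \<in> v \<and> i \<le> k \<and> l \<le> j}"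
      then obtain k l where kl: "(k, l) \<in> v" "i \<le> k" "l \<le> j" "x = k + 1 - i" "y = l + 1 - i" by blast
      have "k < l" using assms(2) kl(1) by blast
      then show "(x, y) \<in> R (i - 1) j v" using kl assms(1) by (simp add: mem_R)
    next
      assume "(x, y) \<in> R (i - 1) j v"
      then have h: "0 < x" "0 < y" "y + (i - 1) \<le> j" "(x + (i - 1), y + (i - 1)) \<in> v" by (auto simp: mem_R)
      show "(x, y) \<in> {(k + 1 - i, l + 1 - i) | k l. (k, l) \<in> v \<and> i \<le> k \<and> l \<le> j}"
        using h assms(1) by (intro CollectI exI[of _ "x + (i - 1)"] exI[of _ "y + (i - 1)"]) auto
    qed
  qed
  then show ?thesis by (simp add: nw_factor_def)
qed

lemma R_V1:
  assumes g: "\<forall>k l. (k, l) \<in> vg \<longrightarrow> 1 \<le> k \<and> k < l \<and> l \<le> G"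
  shows "R (m + 1) (m + G + 1) (insert (m + 1, m + G + 2) (sh (m + 1) vg \<union> sh (m + G + 2) vf)) = vg"
proof (rule set_eqI, clarify)
  fix x y
  show "(x, y) \<in> R (m + 1) (m + G + 1) (insert (m + 1, m + G + 2) (sh (m + 1) vg \<union> sh (m + G + 2) vf)) \<longleftrightarrow> (x, y) \<in> vg"
    using g[rule_format, of x y] by (auto simp: mem_R mem_sh)
qed

lemma R_V2:
  assumes g: "\<forall>k l. (k, l) \<in> vg \<longrightarrow> 1 \<le> k \<and> k < l \<and> l \<le> G"
    and f: "\<forall>k l. (k, l) \<in> vf \<longrightarrow> 1 \<le> k \<and> k < l \<and> l \<le> F"
  shows "R (m + G + 2) (m + G + 2 + F) (insert (m + 1, m + G + 2) (sh (m + 1) vg \<union> sh (m + G + 2) vf)) = vf"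
proof (rule set_eqI, clarify)
  fix x y
  show "(x, y) \<in> R (m + G + 2) (m + G + 2 + F) (insert (m + 1, m + G + 2) (sh (m + 1) vg \<union> sh (m + G + 2) vf)) \<longleftrightarrow> (x, y) \<in> vf"
    using g[rule_format, of "x + G + 1" "y + G + 1"] f[rule_format, of x y] by (auto simp: mem_R mem_sh)
qed



declare phi.simps[simp del]

lemma lf_append[simp]: "lf (f1 @ f2) = lf f1 + lf f2"
  by (induction f1) auto

lemma phi_fll: "f \<noteq> [] \<Longrightarrow> phi b (fll f) = phit b f"
proof (induction "lf f" arbitrary: f b rule: less_induct)
  case less
  from forest_decomp[of f] obtain ws rest where f: "f = map I ws @ rest" and rest: "rest = [] \<or> (\<exists>a g c f''. rest = C a g c # f'')"
    by (elim exE conjE)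
  show ?case
  proof (cases "rest = []")
    case True
    have "phi b (ws, {}) = tfold (top b) (map tsing ws)" by (subst phi.simps) simp
    moreover have "phit b (map I ws) = tfold (top b) (map tsing ws)" by (simp add: phit.simps o_def)
    ultimately show ?thesis using f True by (simp add: fll_mapI)
  next
    case False
    then obtain a g c f'' where rest: "rest = C a g c # f''" using rest by (elim disjE exE) auto
    define m where "m = length ws"
    define G where "G = lf g"
    define F where "F = lf f''"
    obtain wg vg where g: "fll g = (wg, vg)" by fastforce
    obtain wf vf where ff: "fll f'' = (wf, vf)" by fastforce
    have lwg: "length wg = G" using len_fl(2)[of g] g G_def by simp
    have lwf: "length wf = F" using len_fl(2)[of f''] ff F_def by simp
    have rg: "\<forall>k l. (k, l) \<in> vg \<longrightarrow> 1 \<le> k \<and> k < l \<and> l \<le> G"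
      using nr_sub[OF nr_fl(2)[of g]] g G_def by auto
    have rf: "\<forall>k l. (k, l) \<in> vf \<longrightarrow> 1 \<le> k \<and> k < l \<and> l \<le> F"
      using nr_sub[OF nr_fl(2)[of f'']] ff F_def by auto
    define W where "W = ws @ (a # wg @ [c]) @ wf"
    define V where "V = insert (m + 1, m + G + 2) (sh (m + 1) vg \<union> sh (m + G + 2) vf)"
    have fllf: "fll f = (W, V)"
      unfolding f rest W_def V_def m_def
      by (simp add: fll_append fll_mapI lf_mapI g ff sh_union sh_insert sh_sh lwg ac_simps)
    have lW: "length W = m + G + 2 + F" using lwg lwf m_def W_def by simp
    have lff: "lf f = m + G + 2 + F" using f rest m_def G_def F_def by (simp add: lf_mapI)
    have nrV: "nesting_rel (lf f) V" using nr_fl(2)[of f] fllf by simp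
    have vlt: "\<forall>k l. (k, l) \<in> V \<longrightarrow> k < l" using nr_sub[OF nrV] by blast
    have least: "(LEAST i. \<exists>j. (i, j) \<in> V) = m + 1"
    proof (rule Least_equality)
      show "\<exists>j. (m + 1, j) \<in> V" unfolding V_def by blast
    next
      fix y assume "\<exists>j. (y, j) \<in> V"
      then obtain j where "(y, j) \<in> V" by blast
      then show "m + 1 \<le> y" unfolding V_def by (auto simp: mem_sh)
    qed
    have the: "(THE j. (m + 1, j) \<in> V) = m + G + 2"
    proof (rule the_equality)
      show "(m + 1, m + G + 2) \<in> V" unfolding V_def by blast
    next
      fix j assume "(m + 1, j) \<in> V"
      then show "j = m + G + 2" unfolding V_def using rg by (auto simp: mem_sh)
    qed
    have Vne: "V \<noteq> {}" unfolding V_def by blast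
    have unf: "phi b (W, V) = tfold (top b) (map tsing (take m W) @
        [tfold (top (\<not> b)) ([tsing (W ! m)] @ (if m + 1 + 1 \<le> m + G + 2 - 1 then [phi (\<not> b) (nw_factor (W, V) (m + 1 + 1) (m + G + 2 - 1))] else [])
           @ [tsing (W ! (m + G + 2 - 1))])]
        @ (if m + G + 2 + 1 \<le> length W then [phi b (nw_factor (W, V) (m + G + 2 + 1) (length W))] else []))"
      apply (subst phi.simps)
      using Vne least the lW by (simp add: Let_def)
    have fac1: "nw_factor (W, V) (m + 1 + 1) (m + G + 2 - 1) = fll g"
    proof -
      have "nw_factor (W, V) (m + 1 + 1) (m + G + 2 - 1) = (take G (drop (m + 1) W), R (m + 1) (m + G + 1) V)"
        using factor_R[of "m + 1 + 1" V W "m + G + 2 - 1"] vlt by simp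
      also have "R (m + 1) (m + G + 1) V = vg" unfolding V_def by (rule R_V1[OF rg])
      also have "take G (drop (m + 1) W) = wg" unfolding W_def using m_def lwg by simp
      finally show ?thesis using g by simp
    qed
    have fac2: "nw_factor (W, V) (m + G + 2 + 1) (length W) = fll f''"
    proof -
      have "nw_factor (W, V) (m + G + 2 + 1) (length W) = (take F (drop (m + G + 2) W), R (m + G + 2) (m + G + 2 + F) V)"
        using factor_R[of "m + G + 2 + 1" V W "length W"] vlt lW by simp
      also have "R (m + G + 2) (m + G + 2 + F) V = vf" unfolding V_def by (rule R_V2[OF rg rf])
      also have "take F (drop (m + G + 2) W) = wf" unfolding W_def using m_def lwg lwf by simp
      finally show ?thesis using ff by simp
    qed
    have tk: "take m W = ws" "W ! m = a" "W ! (m + G + 2 - 1) = c"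
      unfolding W_def using m_def lwg by (auto simp: nth_append)
    have IHg: "g \<noteq> [] \<Longrightarrow> phi (\<not> b) (fll g) = phit (\<not> b) g"
      using less(1)[of g "\<not> b"] lff G_def by simp
    have IHf: "f'' \<noteq> [] \<Longrightarrow> phi b (fll f'') = phit b f''"
      using less(1)[of f'' b] lff F_def by simp
    have c1: "m + 1 + 1 \<le> m + G + 2 - 1 \<longleftrightarrow> g \<noteq> []" using G_def lf_0_iff[of g] by auto
    have c2: "m + G + 2 + 1 \<le> length W \<longleftrightarrow> f'' \<noteq> []" using lW F_def lf_0_iff[of f''] by auto
    have mid: "tfold (top (\<not> b)) ([tsing (W ! m)] @ (if m + 1 + 1 \<le> m + G + 2 - 1 then [phi (\<not> b) (nw_factor (W, V) (m + 1 + 1) (m + G + 2 - 1))] else [])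
           @ [tsing (W ! (m + G + 2 - 1))]) = phin b (C a g c)"
      unfolding fac1 tk c1 using IHg by simp
    have "phit b f = tfold (top b) (map tsing ws @ [phin b (C a g c)] @ map (phin b) f'')"
      unfolding f rest by (simp add: phit.simps o_def)
    also have "\<dots> = phi b (W, V)"
    proof (cases "f'' = []")
      case True
      then show ?thesis unfolding unf unfolding mid unfolding tk c2 by simp
    next
      case False
      have "phi b (W, V) = tfold (top b) ((map tsing ws @ [phin b (C a g c)]) @ [phit b f''] @ [])"
        unfolding unf unfolding mid unfolding tk c2 fac2 using False IHf by simp
      also have "\<dots> = tfold (top b) ((map tsing ws @ [phin b (C a g c)]) @ map (phin b) f'' @ [])"
        unfolding phit.simps[of b f''] by (rule tfold_flat) (use False in simp)
      finally show ?thesis by simp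
    qed
    finally show ?thesis using fllf by simp
  qed
qed



definition Wt :: "('d, 'k::comm_semiring_1) wnwa \<Rightarrow> 'd nword \<Rightarrow> nat list \<Rightarrow> 'k" where
  "Wt N nw qs = (\<Prod>j \<in> {1..length (fst nw)}. wnwa_step N nw qs j)"

lemma prod_split_nat: fixes a b :: nat shows "prod g {1..a + b} = prod g {1..a} * prod (\<lambda>j. g (j + a)) {1..b}"
proof -
  have "{1..a + b} = {1..a} \<union> {1 + a..b + a}" by auto
  then have "prod g {1..a + b} = prod g {1..a} * prod g {1 + a..b + a}"
    by (simp add: prod.union_disjoint)
  also have "prod g {1 + a..b + a} = prod (\<lambda>j. g (j + a)) {1..b}"
    by (rule prod.shift_bounds_cl_nat_ivl)
  finally show ?thesis .
qed

lemma step_eq: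
  assumes "(\<exists>k. (j, k) \<in> v) \<longleftrightarrow> (\<exists>k. (j', k) \<in> v')"
    "(\<exists>i. (i, j) \<in> v) \<longleftrightarrow> (\<exists>i. (i, j') \<in> v')"
    "(\<exists>i. (i, j) \<in> v) \<Longrightarrow> qs ! ((THE i. (i, j) \<in> v) - 1) = qs' ! ((THE i. (i, j') \<in> v') - 1)"
    "qs ! (j - 1) = qs' ! (j' - 1)" "qs ! j = qs' ! j'" "w ! (j - 1) = w' ! (j' - 1)"
  shows "wnwa_step N (w, v) qs j = wnwa_step N (w', v') qs' j'"
  using assms unfolding wnwa_step_def by simp

lemma nr_uniq_i: "nesting_rel n v \<Longrightarrow> (i, j) \<in> v \<Longrightarrow> (THE i. (i, j) \<in> v) = i"
  unfolding nesting_rel_def by (rule the_equality) blast+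

lemma step_cat1:
  assumes n1: "nesting_rel (length w1) v1" and n2: "nesting_rel (length w2) v2"
    and j: "1 \<le> j" "j \<le> length w1" and lq: "length w1 + length w2 < length qs"
  shows "wnwa_step N (w1 @ w2, v1 \<union> sh (length w1) v2) qs j = wnwa_step N (w1, v1) qs j"
proof (rule step_eq)
  have nin: "(x, y) \<in> sh (length w1) v2 \<Longrightarrow> length w1 < x \<and> length w1 < y" for x y
    using nr_sub[OF n2, of "x - length w1" "y - length w1"] by (auto simp: mem_sh)
  show "(\<exists>k. (j, k) \<in> v1 \<union> sh (length w1) v2) \<longleftrightarrow> (\<exists>k. (j, k) \<in> v1)" using nin j by fastforce
  show ret: "(\<exists>i. (i, j) \<in> v1 \<union> sh (length w1) v2) \<longleftrightarrow> (\<exists>i. (i, j) \<in> v1)" using nin j by fastforce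
  assume "\<exists>i. (i, j) \<in> v1 \<union> sh (length w1) v2"
  then obtain i where i: "(i, j) \<in> v1" using ret by blast
  have "nesting_rel (length w1 + length w2) (v1 \<union> sh (length w1) v2)" by (rule nr_cat[OF n1 n2])
  then have "(THE i. (i, j) \<in> v1 \<union> sh (length w1) v2) = i" using i by (intro nr_uniq_i) auto
  moreover have "(THE i. (i, j) \<in> v1) = i" using nr_uniq_i[OF n1 i] .
  ultimately show "qs ! ((THE i. (i, j) \<in> v1 \<union> sh (length w1) v2) - 1) = qs ! ((THE i. (i, j) \<in> v1) - 1)" by simp
qed (use j in \<open>auto simp: nth_append\<close>)

lemma step_cat2:
  assumes n1: "nesting_rel (length w1) v1" and n2: "nesting_rel (length w2) v2"
    and j: "1 \<le> j" "j \<le> length w2" and lq: "length w1 + length w2 < length qs"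
  shows "wnwa_step N (w1 @ w2, v1 \<union> sh (length w1) v2) qs (j + length w1) = wnwa_step N (w2, v2) (drop (length w1) qs) j"
proof (rule step_eq)
  let ?n = "length w1"
  have nin: "(x, y) \<in> v1 \<Longrightarrow> y \<le> ?n \<and> x \<le> ?n" for x y
    using nr_sub[OF n1, of x y] by auto
  show "(\<exists>k. (j + ?n, k) \<in> v1 \<union> sh ?n v2) \<longleftrightarrow> (\<exists>k. (j, k) \<in> v2)"
  proof
    assume "\<exists>k. (j + ?n, k) \<in> v1 \<union> sh ?n v2"
    then obtain k where "(j + ?n, k) \<in> v1 \<union> sh ?n v2" by blast
    then show "\<exists>k. (j, k) \<in> v2" using j by (auto simp: mem_sh dest: nin)
  next
    assume "\<exists>k. (j, k) \<in> v2"
    then obtain k where "(j, k) \<in> v2" by blast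
    then have "(j + ?n, k + ?n) \<in> sh ?n v2" by (simp add: mem_sh')
    then show "\<exists>k. (j + ?n, k) \<in> v1 \<union> sh ?n v2" by blast
  qed
  show ret: "(\<exists>i. (i, j + ?n) \<in> v1 \<union> sh ?n v2) \<longleftrightarrow> (\<exists>i. (i, j) \<in> v2)"
  proof
    assume "\<exists>i. (i, j + ?n) \<in> v1 \<union> sh ?n v2"
    then obtain i where "(i, j + ?n) \<in> v1 \<union> sh ?n v2" by blast
    then show "\<exists>i. (i, j) \<in> v2" using j by (auto simp: mem_sh dest: nin)
  next
    assume "\<exists>i. (i, j) \<in> v2"
    then obtain i where "(i, j) \<in> v2" by blast
    then have "(i + ?n, j + ?n) \<in> sh ?n v2" by (simp add: mem_sh')
    then show "\<exists>i. (i, j + ?n) \<in> v1 \<union> sh ?n v2" by blast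
  qed
  assume "\<exists>i. (i, j + ?n) \<in> v1 \<union> sh ?n v2"
  then obtain i where i: "(i, j) \<in> v2" using ret by blast
  have i1: "1 \<le> i" "i \<le> length w2" using nr_sub[OF n2 i] by auto
  have "nesting_rel (length w1 + length w2) (v1 \<union> sh ?n v2)" by (rule nr_cat[OF n1 n2])
  moreover have "(i + ?n, j + ?n) \<in> v1 \<union> sh ?n v2" using i by (simp add: mem_sh')
  ultimately have "(THE i. (i, j + ?n) \<in> v1 \<union> sh ?n v2) = i + ?n" by (rule nr_uniq_i)
  moreover have "(THE i. (i, j) \<in> v2) = i" using nr_uniq_i[OF n2 i] .
  ultimately show "qs ! ((THE i. (i, j + ?n) \<in> v1 \<union> sh ?n v2) - 1) = drop ?n qs ! ((THE i. (i, j) \<in> v2) - 1)"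
    using i1 lq by (simp add: add.commute)
qed (use j lq in \<open>auto simp: nth_append add.commute\<close>)

lemma Wt_cat:
  assumes n1: "nesting_rel (length w1) v1" and n2: "nesting_rel (length w2) v2"
    and lq: "length w1 + length w2 < length qs"
  shows "Wt N (w1 @ w2, v1 \<union> sh (length w1) v2) qs = Wt N (w1, v1) qs * Wt N (w2, v2) (drop (length w1) qs)"
proof -
  have "Wt N (w1 @ w2, v1 \<union> sh (length w1) v2) qs
     = (\<Prod>j\<in>{1..length w1}. wnwa_step N (w1 @ w2, v1 \<union> sh (length w1) v2) qs j)
       * (\<Prod>j\<in>{1..length w2}. wnwa_step N (w1 @ w2, v1 \<union> sh (length w1) v2) qs (j + length w1))"
    unfolding Wt_def fst_conv length_append by (rule prod_split_nat)
  also have "(\<Prod>j\<in>{1..length w1}. wnwa_step N (w1 @ w2, v1 \<union> sh (length w1) v2) qs j) = Wt N (w1, v1) qs"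
    unfolding Wt_def fst_conv by (rule prod.cong[OF refl], rule step_cat1[OF n1 n2 _ _ lq]) auto
  also have "(\<Prod>j\<in>{1..length w2}. wnwa_step N (w1 @ w2, v1 \<union> sh (length w1) v2) qs (j + length w1))
      = Wt N (w2, v2) (drop (length w1) qs)"
    unfolding Wt_def fst_conv by (rule prod.cong[OF refl], rule step_cat2[OF n1 n2 _ _ lq]) auto
  finally show ?thesis .
qed

lemma step_wrap:
  assumes nr: "nesting_rel (length w) v" and lq: "length w + 2 < length qs"
  shows "wnwa_step N (a # w @ [c], insert (1, length w + 2) (sh 1 v)) qs 1 = nwa_call N (qs ! 0) a (qs ! 1)"
    "wnwa_step N (a # w @ [c], insert (1, length w + 2) (sh 1 v)) qs (length w + 2)
       = nwa_ret N (qs ! (length w + 1)) (qs ! 0) c (qs ! (length w + 2))"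
    "1 \<le> j \<Longrightarrow> j \<le> length w \<Longrightarrow>
     wnwa_step N (a # w @ [c], insert (1, length w + 2) (sh 1 v)) qs (j + 1) = wnwa_step N (w, v) (drop 1 qs) j"
proof -
  let ?V = "insert (1, length w + 2) (sh 1 v)"
  have nin: "(x, y) \<in> v \<Longrightarrow> 1 \<le> x \<and> x < y \<and> y \<le> length w" for x y using nr_sub[OF nr] by blast
  have nrV: "nesting_rel (length w + 2) ?V" by (rule nr_wrap[OF nr])
  show "wnwa_step N (a # w @ [c], ?V) qs 1 = nwa_call N (qs ! 0) a (qs ! 1)"
    unfolding wnwa_step_def by auto
  have nc: "\<not> (\<exists>k. (length w + 2, k) \<in> ?V)" by (auto simp: mem_sh dest: nin)
  have th: "(THE i. (i, length w + 2) \<in> ?V) = 1" by (rule nr_uniq_i[OF nrV]) simp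
  show "wnwa_step N (a # w @ [c], ?V) qs (length w + 2)
       = nwa_ret N (qs ! (length w + 1)) (qs ! 0) c (qs ! (length w + 2))"
    unfolding wnwa_step_def using nc th by (auto simp: nth_append)
  assume j: "1 \<le> j" "j \<le> length w"
  show "wnwa_step N (a # w @ [c], ?V) qs (j + 1) = wnwa_step N (w, v) (drop 1 qs) j"
  proof (rule step_eq)
    show "(\<exists>k. (j + 1, k) \<in> ?V) \<longleftrightarrow> (\<exists>k. (j, k) \<in> v)"
    proof
      assume "\<exists>k. (j + 1, k) \<in> ?V"
      then obtain k where "(j + 1, k) \<in> ?V" by blast
      then show "\<exists>k. (j, k) \<in> v" using j by (auto simp: mem_sh)
    next
      assume "\<exists>k. (j, k) \<in> v"
      then obtain k where "(j, k) \<in> v" by blast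
      then have "(j + 1, k + 1) \<in> sh 1 v" by (simp add: mem_sh)
      then show "\<exists>k. (j + 1, k) \<in> ?V" by blast
    qed
    show ret: "(\<exists>i. (i, j + 1) \<in> ?V) \<longleftrightarrow> (\<exists>i. (i, j) \<in> v)"
    proof
      assume "\<exists>i. (i, j + 1) \<in> ?V"
      then obtain i where "(i, j + 1) \<in> ?V" by blast
      then show "\<exists>i. (i, j) \<in> v" using j by (auto simp: mem_sh)
    next
      assume "\<exists>i. (i, j) \<in> v"
      then obtain i where "(i, j) \<in> v" by blast
      then have "(i + 1, j + 1) \<in> sh 1 v" by (simp add: mem_sh)
      then show "\<exists>i. (i, j + 1) \<in> ?V" by blast
    qed
    assume "\<exists>i. (i, j + 1) \<in> ?V"
    then obtain i where i: "(i, j) \<in> v" using ret by blast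
    have i1: "1 \<le> i" using nin[OF i] by simp
    have "(i + 1, j + 1) \<in> ?V" using i by (simp add: mem_sh)
    then have "(THE i. (i, j + 1) \<in> ?V) = i + 1" by (rule nr_uniq_i[OF nrV])
    moreover have "(THE i. (i, j) \<in> v) = i" using nr_uniq_i[OF nr i] .
    ultimately show "qs ! ((THE i. (i, j + 1) \<in> ?V) - 1) = drop 1 qs ! ((THE i. (i, j) \<in> v) - 1)"
      using i1 lq j by simp
  qed (use j lq in \<open>auto simp: nth_append\<close>)
qed

lemma Wt_wrap:
  assumes nr: "nesting_rel (length w) v" and lq: "length w + 2 < length qs"
  shows "Wt N (a # w @ [c], insert (1, length w + 2) (sh 1 v)) qs
    = nwa_call N (qs ! 0) a (qs ! 1) * Wt N (w, v) (drop 1 qs) * nwa_ret N (qs ! (length w + 1)) (qs ! 0) c (qs ! (length w + 2))"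
proof -
  let ?g = "wnwa_step N (a # w @ [c], insert (1, length w + 2) (sh 1 v)) qs"
  have "Wt N (a # w @ [c], insert (1, length w + 2) (sh 1 v)) qs = prod ?g {1..1 + Suc (length w)}"
    unfolding Wt_def by simp
  also have "\<dots> = ?g 1 * (prod (\<lambda>j. ?g (j + 1)) {1..length w} * ?g (length w + 2))"
    unfolding prod_split_nat by simp
  also have "prod (\<lambda>j. ?g (j + 1)) {1..length w} = Wt N (w, v) (drop 1 qs)"
    unfolding Wt_def fst_conv by (rule prod.cong[OF refl], rule step_wrap(3)[OF nr lq]) auto
  finally have e: "Wt N (a # w @ [c], insert (1, length w + 2) (sh 1 v)) qs = ?g 1 * (Wt N (w, v) (drop 1 qs) * ?g (length w + 2))" .
  have s1: "?g 1 = nwa_call N (qs ! 0) a (qs ! 1)" by (rule step_wrap(1)[OF nr lq])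
  have s2: "?g (length w + 2) = nwa_ret N (qs ! (length w + 1)) (qs ! 0) c (qs ! (length w + 2))" by (rule step_wrap(2)[OF nr lq])
  show ?thesis using e unfolding s1 s2 by (simp add: ac_simps)
qed

lemma Wt_fl:
  fixes x :: "'d node" and f :: "'d node list"
  shows "ln x < length qs \<Longrightarrow> Wt N (fln x) qs = (case x of I a \<Rightarrow> nwa_int N (qs ! 0) a (qs ! 1)
      | C a g c \<Rightarrow> nwa_call N (qs ! 0) a (qs ! 1) * Wt N (fll g) (drop 1 qs) * nwa_ret N (qs ! (lf g + 1)) (qs ! 0) c (qs ! (lf g + 2)))"
    and "Wt N (fll []) qs = 1"
    and "lf (x # f) < length qs \<Longrightarrow> Wt N (fll (x # f)) qs = Wt N (fln x) qs * Wt N (fll f) (drop (ln x) qs)"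
proof -
  show "ln x < length qs \<Longrightarrow> Wt N (fln x) qs = (case x of I a \<Rightarrow> nwa_int N (qs ! 0) a (qs ! 1)
      | C a g c \<Rightarrow> nwa_call N (qs ! 0) a (qs ! 1) * Wt N (fll g) (drop 1 qs) * nwa_ret N (qs ! (lf g + 1)) (qs ! 0) c (qs ! (lf g + 2)))"
  proof (cases x)
    case (I a)
    then show ?thesis by (simp add: Wt_def wnwa_step_def)
  next
    case (C a g c)
    assume l: "ln x < length qs"
    obtain w v where wv: "fll g = (w, v)" by fastforce
    have lw: "length w = lf g" using len_fl(2)[of g] wv by simp
    have nr: "nesting_rel (length w) v" using nr_fl(2)[of g] wv lw by simp
    show ?thesis using Wt_wrap[OF nr, of qs N a c] l C wv lw by simp
  qed
  show "Wt N (fll []) qs = 1" by (simp add: Wt_def)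
  assume l: "lf (x # f) < length qs"
  show "Wt N (fll (x # f)) qs = Wt N (fln x) qs * Wt N (fll f) (drop (ln x) qs)"
  proof -
    obtain w1 v1 where 1: "fln x = (w1, v1)" by fastforce
    obtain w2 v2 where 2: "fll f = (w2, v2)" by fastforce
    have l1: "length w1 = ln x" using len_fl(1)[of x] 1 by simp
    have l2: "length w2 = lf f" using len_fl(2)[of f] 2 by simp
    have n1: "nesting_rel (length w1) v1" using nr_fl(1)[of x] 1 l1 by simp
    have n2: "nesting_rel (length w2) v2" using nr_fl(2)[of f] 2 l2 by simp
    show ?thesis using Wt_cat[OF n1 n2, of qs N] l 1 2 l1 l2 by simp
  qed
qed



section \<open>State encoding\<close>

definition st :: "bool \<Rightarrow> nat \<Rightarrow> nat \<Rightarrow> nat \<Rightarrow> nat" where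
  "st k p q s = prod_encode (prod_encode ((if k then 0 else 3) + p, q), s)"

definition dc :: "nat \<Rightarrow> nat" where "dc n = fst (prod_decode (fst (prod_decode n)))"
definition dk :: "nat \<Rightarrow> bool" where "dk n = (dc n < 3)"
definition dp :: "nat \<Rightarrow> nat" where "dp n = dc n mod 3"
definition dq :: "nat \<Rightarrow> nat" where "dq n = snd (prod_decode (fst (prod_decode n)))"
definition ds :: "nat \<Rightarrow> nat" where "ds n = snd (prod_decode n)"

lemma dec_st[simp]:
  assumes "p < 3"
  shows "dk (st k p q s) = k" "dp (st k p q s) = p" "dq (st k p q s) = q" "ds (st k p q s) = s"
  using assms by (auto simp: st_def dk_def dp_def dq_def ds_def dc_def)

lemma st_inj[simp]: "p < 3 \<Longrightarrow> p' < 3 \<Longrightarrow> st k p q s = st k' p' q' s' \<longleftrightarrow> k = k' \<and> p = p' \<and> q = q' \<and> s = s'"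
  by (auto simp: st_def split: if_splits)

section \<open>The automaton\<close>

context
  fixes N :: "('d, 'k::comm_semiring_1) wnwa" and b0 :: bool
begin

definition QS :: "nat set" where "QS = insert 0 (nwa_Q N)"

definition Hs :: "bool \<Rightarrow> nat set" where
  "Hs k = {st k p q s | p q s. p < 3 \<and> q \<in> nwa_Q N \<and> s \<in> QS}"

definition amu :: "nat \<Rightarrow> 'd \<Rightarrow> nat \<Rightarrow> 'k" where
  "amu x a y = (if dq x \<in> nwa_Q N \<and> dq y \<in> nwa_Q N \<and> ds x = ds y then
      (if dp x = 0 \<and> dp y = 1 then nwa_call N (dq x) a (dq y)
       else if dp x = 1 \<and> dp y = 1 then nwa_int N (dq x) a (dq y)
       else if dp x = 1 \<and> dp y = 2 then nwa_ret N (dq x) (ds x) a (dq y)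
       else 0) else 0)"

definition aop :: "nat \<Rightarrow> nat \<Rightarrow> nat \<Rightarrow> 'k" where
  "aop x s y = (if dp x = 1 \<and> dp y = 0 \<and> s = ds x \<and> dq y = dq x \<and> ds y = dq x then 1 else 0)"

definition acl :: "nat \<Rightarrow> nat \<Rightarrow> nat \<Rightarrow> 'k" where
  "acl x s y = (if dp x = 2 \<and> dp y = 1 \<and> s = ds y \<and> dq y = dq x then 1 else 0)"

definition alam :: "nat \<Rightarrow> 'k" where
  "alam x = (if x \<in> Hs b0 \<and> dp x = 1 \<and> ds x = 0 then nwa_iota N (dq x) else 0)"

definition agam :: "nat \<Rightarrow> 'k" where
  "agam x = (if x \<in> Hs b0 \<and> dp x = 1 \<and> ds x = 0 then nwa_kappa N (dq x) else 0)"

definition AA :: "('d, 'k) wpa" where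
  "AA = \<lparr>pa_H = Hs True, pa_V = Hs False, pa_Om = QS, pa_mu = amu, pa_op = aop, pa_cl = acl,
         pa_lam = alam, pa_gam = agam\<rparr>"

lemma AA_simps[simp]: "pa_H AA = Hs True" "pa_V AA = Hs False" "pa_Om AA = QS" "pa_mu AA = amu"
  "pa_op AA = aop" "pa_cl AA = acl" "pa_lam AA = alam" "pa_gam AA = agam"
  by (simp_all add: AA_def)

lemma st_in_Hs: "p < 3 \<Longrightarrow> st k p q s \<in> Hs k' \<longleftrightarrow> k = k' \<and> q \<in> nwa_Q N \<and> s \<in> QS"
proof
  assume p: "p < 3" and "st k p q s \<in> Hs k'"
  then obtain p' q' s' where e: "st k p q s = st k' p' q' s'" "p' < 3" "q' \<in> nwa_Q N" "s' \<in> QS"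
    by (auto simp: Hs_def)
  then have "k = k' \<and> p = p' \<and> q = q' \<and> s = s'" using st_inj[OF p e(2)] by simp
  then show "k = k' \<and> q \<in> nwa_Q N \<and> s \<in> QS" using e by simp
qed (auto simp: Hs_def)

lemma Hs_dec: "x \<in> Hs k \<Longrightarrow> x = st (dk x) (dp x) (dq x) (ds x) \<and> dk x = k \<and> dp x < 3 \<and> dq x \<in> nwa_Q N \<and> ds x \<in> QS"
  by (auto simp: Hs_def)

lemma Hs_disj: "Hs True \<inter> Hs False = {}"
proof (rule equals0I)
  fix x assume "x \<in> Hs True \<inter> Hs False"
  then have "dk x" "\<not> dk x" using Hs_dec[of x True] Hs_dec[of x False] by auto
  then show False by simp
qed

lemma Hs_finite: "finite (nwa_Q N) \<Longrightarrow> finite (Hs k)"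
proof -
  assume f: "finite (nwa_Q N)"
  have "Hs k \<subseteq> (\<lambda>(p, q, s). st k p q s) ` ({..<3} \<times> nwa_Q N \<times> QS)"
  proof
    fix x assume "x \<in> Hs k"
    then obtain p q s where "x = st k p q s" "p < 3" "q \<in> nwa_Q N" "s \<in> QS" by (auto simp: Hs_def)
    then show "x \<in> (\<lambda>(p, q, s). st k p q s) ` ({..<3} \<times> nwa_Q N \<times> QS)"
      by (intro rev_image_eqI[of "(p, q, s)"]) auto
  qed
  moreover have "finite ((\<lambda>(p, q, s). st k p q s) ` ({..<3} \<times> nwa_Q N \<times> QS))"
    using f by (simp add: QS_def)
  ultimately show ?thesis by (rule finite_subset)
qed

lemma wpa_ok_AA: "finite (nwa_Q N) \<Longrightarrow> wpa_ok AA"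
  by (simp add: wpa_ok_def Hs_finite Hs_disj QS_def)

end



fun EB :: "bool \<Rightarrow> nat \<Rightarrow> 'd node \<Rightarrow> nat list \<Rightarrow> 'd blk"
and EL :: "bool \<Rightarrow> nat \<Rightarrow> 'd node list \<Rightarrow> nat list \<Rightarrow> 'd blk list" where
  "EB k s (I a) qs = Atm (st k 1 (qs ! 0) s) a (st k 1 (qs ! 1) s)"
| "EB k s (C a g c) qs = Brk (st k 1 (qs ! 0) s) s
     ([Atm (st (\<not> k) 0 (qs ! 0) (qs ! 0)) a (st (\<not> k) 1 (qs ! 1) (qs ! 0))]
      @ EL (\<not> k) (qs ! 0) g (drop 1 qs)
      @ [Atm (st (\<not> k) 1 (qs ! (lf g + 1)) (qs ! 0)) c (st (\<not> k) 2 (qs ! (lf g + 2)) (qs ! 0))])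
     (st k 1 (qs ! (lf g + 2)) s)"
| "EL k s [] qs = []"
| "EL k s (x # f) qs = EB k s x qs # EL k s f (drop (ln x) qs)"

lemma EL_len[simp]: "length (EL k s f qs) = length f"
  by (induction f arbitrary: qs) auto

lemma EL_Nil_iff[simp]: "EL k s f qs = [] \<longleftrightarrow> f = []"
  by (cases f) auto

lemma E_cong:
  fixes x :: "'d node" and f :: "'d node list"
  shows "(\<And>i. i \<le> ln x \<Longrightarrow> qs1 ! i = qs2 ! i) \<Longrightarrow> length qs1 > ln x \<Longrightarrow> length qs2 > ln x \<Longrightarrow> EB k s x qs1 = EB k s x qs2"
  "(\<And>i. i \<le> lf f \<Longrightarrow> qs1 ! i = qs2 ! i) \<Longrightarrow> length qs1 > lf f \<Longrightarrow> length qs2 > lf f \<Longrightarrow> EL k s f qs1 = EL k s f qs2"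
proof (induction k s x qs1 and k s f qs1 arbitrary: qs2 and qs2 rule: EB_EL.induct)
  case (1 k s a qs)
  then show ?case by simp
next
  case (2 k s a g c qs)
  have "EL (\<not> k) (qs ! 0) g (drop 1 qs) = EL (\<not> k) (qs ! 0) g (drop 1 qs2)"
  proof (rule 2(1))
    fix i assume "i \<le> lf g" then show "drop 1 qs ! i = drop 1 qs2 ! i" using 2(2)[of "i + 1"] 2(3,4) by simp
  qed (use 2 in auto)
  then show ?case using 2(2)[of 0] 2(2)[of 1] 2(2)[of "lf g + 1"] 2(2)[of "lf g + 2"] by simp
next
  case (3 k s qs)
  then show ?case by simp
next
  case (4 k s x f qs)
  have "EB k s x qs = EB k s x qs2" by (rule 4(1)) (use 4 in auto)
  moreover have "EL k s f (drop (ln x) qs) = EL k s f (drop (ln x) qs2)"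
  proof (rule 4(2))
    fix i assume "i \<le> lf f" then show "drop (ln x) qs ! i = drop (ln x) qs2 ! i"
      using 4(3)[of "ln x + i"] 4(4,5) by simp
  qed (use 4 in auto)
  ultimately show ?case by simp
qed

lemma E_ends:
  fixes x :: "'d node" and f :: "'d node list"
  shows "bini (EB k s x qs) = st k 1 (qs ! 0) s" "bfin (EB k s x qs) = st k 1 (qs ! ln x) s"
  by (cases x; simp)+

lemma EL_ends:
  "f \<noteq> [] \<Longrightarrow> lf f < length qs \<Longrightarrow> rini (EL k s f qs) = st k 1 (qs ! 0) s"
  "f \<noteq> [] \<Longrightarrow> lf f < length qs \<Longrightarrow> rfin (EL k s f qs) = st k 1 (qs ! lf f) s"
proof -
  assume "f \<noteq> []" "lf f < length qs"
  then obtain x f' where f: "f = x # f'" by (cases f) auto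
  show "rini (EL k s f qs) = st k 1 (qs ! 0) s" using f by (simp add: rini_def E_ends)
next
  show "f \<noteq> [] \<Longrightarrow> lf f < length qs \<Longrightarrow> rfin (EL k s f qs) = st k 1 (qs ! lf f) s"
  proof (induction f arbitrary: qs)
    case (Cons x f)
    show ?case
    proof (cases "f = []")
      case True
      then show ?thesis by (simp add: rfin_def E_ends)
    next
      case False
      have "rfin (EL k s f (drop (ln x) qs)) = st k 1 (drop (ln x) qs ! lf f) s"
        using Cons False by simp
      then show ?thesis using False Cons(3) by (simp add: rfin_def)
    qed
  qed simp
qed

lemma EL_junct:
  "lf f < length qs \<Longrightarrow> b \<in> set (EL k s f qs) \<Longrightarrow> \<exists>i \<le> lf f. bfin b = st k 1 (qs ! i) s"
proof (induction f arbitrary: qs)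
  case (Cons x f)
  show ?case
  proof (cases "b = EB k s x qs")
    case True then show ?thesis by (intro exI[of _ "ln x"]) (simp add: E_ends)
  next
    case False
    then have bm: "b \<in> set (EL k s f (drop (ln x) qs))" using Cons by simp
    have "lf f < length (drop (ln x) qs)" using Cons(2) by simp
    from Cons.IH[OF this bm] obtain i where "i \<le> lf f" "bfin b = st k 1 (drop (ln x) qs ! i) s" by blast
    then show ?thesis using Cons(2) by (intro exI[of _ "ln x + i"]) simp
  qed
qed simp



lemma wpa_wt_append: "wpa_wt A (xs @ ys) = wpa_wt A xs * wpa_wt A ys"
  by (induction xs) (auto simp: mult.assoc)

lemma lab_tfold:
  "(\<forall>b \<in> set (butlast r). (bfin b \<in> pa_H A) = kk) \<Longrightarrow> wpa_lab A r = tfold (top kk) (map (wpa_blab A) r)"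
proof (induction r)
  case (Cons b r)
  show ?case
  proof (cases r)
    case (Cons c rs)
    have h: "(bfin b \<in> pa_H A) = kk" using Cons.prems \<open>r = c # rs\<close> by simp
    have "\<forall>b \<in> set (butlast r). (bfin b \<in> pa_H A) = kk"
      using Cons.prems \<open>r = c # rs\<close> by (auto dest: in_set_butlastD)
    then have i: "wpa_lab A r = tfold (top kk) (map (wpa_blab A) r)" using Cons.IH by blast
    have "wpa_lab A (b # c # rs) = top kk (wpa_blab A b) (wpa_lab A (c # rs))"
      using h by (cases kk) (simp_all add: top_def)
    then show ?thesis using i \<open>r = c # rs\<close> by simp
  qed simp
qed simp

context
  fixes N :: "('d, 'k::comm_semiring_1) wnwa" and b0 :: bool
begin

lemma E_run:
  fixes x :: "'d node" and f :: "'d node list"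
  shows "set qs \<subseteq> nwa_Q N \<Longrightarrow> s \<in> QS N \<Longrightarrow> ln x < length qs \<Longrightarrow> wpa_run (AA N b0) [EB k s x qs]"
    "set qs \<subseteq> nwa_Q N \<Longrightarrow> s \<in> QS N \<Longrightarrow> lf f < length qs \<Longrightarrow> f \<noteq> [] \<Longrightarrow> wpa_run (AA N b0) (EL k s f qs)"
proof (induction k s x qs and k s f qs rule: EB_EL.induct)
  case (1 k s a qs)
  have l: "0 < length qs" "1 < length qs" using 1(3) by auto
  have "qs ! 0 \<in> nwa_Q N" "qs ! 1 \<in> nwa_Q N" using 1(1) nth_mem[OF l(1)] nth_mem[OF l(2)] by blast+
  then show ?case using 1 by (cases k) (auto intro!: wpa_run.atom simp: st_in_Hs)
next
  case (2 k s a g c qs)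
  let ?A = "AA N b0"
  have inQ: "qs ! i \<in> nwa_Q N" if "i \<le> lf g + 2" for i using 2(2,4) that by auto
  have inQS: "qs ! i \<in> QS N" if "i \<le> lf g + 2" for i using inQ[OF that] by (simp add: QS_def)
  let ?A1 = "Atm (st (\<not> k) 0 (qs ! 0) (qs ! 0)) a (st (\<not> k) 1 (qs ! 1) (qs ! 0))"
  let ?A2 = "Atm (st (\<not> k) 1 (qs ! (lf g + 1)) (qs ! 0)) c (st (\<not> k) 2 (qs ! (lf g + 2)) (qs ! 0))"
  have r1: "wpa_run ?A [?A1]"
    using inQ[of 0] inQ[of 1] inQS[of 0] by (intro wpa_run.atom) (cases k; simp add: st_in_Hs)
  have rA2: "wpa_run ?A [?A2]"
    using inQ[of "lf g + 1"] inQ[of "lf g + 2"] inQS[of 0] by (intro wpa_run.atom) (cases k; simp add: st_in_Hs)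
  have r2: "wpa_run ?A (EL (\<not> k) (qs ! 0) g (drop 1 qs) @ [?A2]) \<and> rini (EL (\<not> k) (qs ! 0) g (drop 1 qs) @ [?A2]) = st (\<not> k) 1 (qs ! 1) (qs ! 0)"
  proof (cases "g = []")
    case True
    then show ?thesis using rA2 by (simp add: rini_def)
  next
    case False
    have rg: "wpa_run ?A (EL (\<not> k) (qs ! 0) g (drop 1 qs))"
      using 2(1)[OF _ _ _ False] 2(2,3,4) inQS[of 0] set_drop_subset[of 1 qs] by auto
    have "rfin (EL (\<not> k) (qs ! 0) g (drop 1 qs)) = rini [?A2]"
      using EL_ends(2)[OF False, of "drop 1 qs" "\<not> k" "qs ! 0"] 2(4) by (simp add: rini_def)
    then have "wpa_run ?A (EL (\<not> k) (qs ! 0) g (drop 1 qs) @ [?A2])" by (rule wpa_run.cat[OF rg rA2])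
    moreover have "rini (EL (\<not> k) (qs ! 0) g (drop 1 qs) @ [?A2]) = st (\<not> k) 1 (qs ! 1) (qs ! 0)"
      using EL_ends(1)[OF False, of "drop 1 qs" "\<not> k" "qs ! 0"] 2(4) False
      by (cases g) (auto simp: rini_def)
    ultimately show ?thesis by simp
  qed
  have "wpa_run ?A [Brk (st k 1 (qs ! 0) s) s ([?A1] @ (EL (\<not> k) (qs ! 0) g (drop 1 qs) @ [?A2])) (st k 1 (qs ! (lf g + 2)) s)]"
  proof (rule wpa_run.br[OF r1 r2[THEN conjunct1]])
    show "rfin [?A1] = rini (EL (\<not> k) (qs ! 0) g (drop 1 qs) @ [?A2])" using r2 by (simp add: rfin_def)
    show "s \<in> pa_Om ?A" using 2 by simp
    show "rini [?A1] \<in> pa_H ?A \<and> st k 1 (qs ! 0) s \<in> pa_V ?A \<and> st k 1 (qs ! (lf g + 2)) s \<in> pa_V ?A \<or>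
      rini [?A1] \<in> pa_V ?A \<and> st k 1 (qs ! 0) s \<in> pa_H ?A \<and> st k 1 (qs ! (lf g + 2)) s \<in> pa_H ?A"
      using inQ[of 0] inQ[of "lf g + 2"] inQS[of 0] 2(3) by (cases k) (simp_all add: rini_def st_in_Hs)
  qed
  then show ?case by simp
next
  case (3 k s qs)
  then show ?case by simp
next
  case (4 k s x f qs)
  have r1: "wpa_run (AA N b0) [EB k s x qs]" using 4 by simp
  show ?case
  proof (cases "f = []")
    case True then show ?thesis using r1 by simp
  next
    case False
    have r2: "wpa_run (AA N b0) (EL k s f (drop (ln x) qs))"
      using 4(2)[OF _ _ _ False] 4(3,4,5) set_drop_subset[of "ln x" qs] by auto
    have "rfin [EB k s x qs] = rini (EL k s f (drop (ln x) qs))"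
      using EL_ends(1)[OF False, of "drop (ln x) qs"] 4(5) by (simp add: rfin_def E_ends)
    from wpa_run.cat[OF r1 r2 this] show ?thesis by simp
  qed
qed

end



context
  fixes N :: "('d, 'k::comm_semiring_1) wnwa" and b0 :: bool
begin

lemma E_lab:
  fixes x :: "'d node" and f :: "'d node list"
  shows "set qs \<subseteq> nwa_Q N \<Longrightarrow> s \<in> QS N \<Longrightarrow> ln x < length qs \<Longrightarrow> wpa_blab (AA N b0) (EB k s x qs) = phin k x"
    "set qs \<subseteq> nwa_Q N \<Longrightarrow> s \<in> QS N \<Longrightarrow> lf f < length qs \<Longrightarrow> map (wpa_blab (AA N b0)) (EL k s f qs) = map (phin k) f"
proof (induction k s x qs and k s f qs rule: EB_EL.induct)
  case (1 k s a qs)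
  then show ?case by simp
next
  case (2 k s a g c qs)
  let ?A = "AA N b0"
  have l: "0 < length qs" "1 < length qs" using 2(4) by auto
  have q0: "qs ! 0 \<in> nwa_Q N" "qs ! 1 \<in> nwa_Q N" using 2(2) nth_mem[OF l(1)] nth_mem[OF l(2)] by blast+
  have q0S: "qs ! 0 \<in> QS N" using q0 by (simp add: QS_def)
  have sd: "set (drop 1 qs) \<subseteq> nwa_Q N" using 2(2) set_drop_subset[of 1 qs] by auto
  let ?A1 = "Atm (st (\<not> k) 0 (qs ! 0) (qs ! 0)) a (st (\<not> k) 1 (qs ! 1) (qs ! 0))"
  let ?A2 = "Atm (st (\<not> k) 1 (qs ! (lf g + 1)) (qs ! 0)) c (st (\<not> k) 2 (qs ! (lf g + 2)) (qs ! 0))"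
  let ?Eg = "EL (\<not> k) (qs ! 0) g (drop 1 qs)"
  have mg: "map (wpa_blab ?A) ?Eg = map (phin (\<not> k)) g"
    using 2(1) sd q0S 2(4) by simp
  have junc: "\<forall>b \<in> set (butlast ([?A1] @ ?Eg @ [?A2])). (bfin b \<in> pa_H ?A) = (\<not> k)"
  proof
    fix b assume "b \<in> set (butlast ([?A1] @ ?Eg @ [?A2]))"
    then have "b = ?A1 \<or> b \<in> set ?Eg" by (simp add: butlast_append)
    then show "(bfin b \<in> pa_H ?A) = (\<not> k)"
    proof
      assume "b = ?A1" then show ?thesis using q0 q0S by (simp add: st_in_Hs)
    next
      assume bm: "b \<in> set ?Eg"
      have "lf g < length (drop 1 qs)" using 2(4) by simp
      from EL_junct[OF this bm] obtain i where i: "i \<le> lf g" "bfin b = st (\<not> k) 1 (drop 1 qs ! i) (qs ! 0)" by blast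
      have "drop 1 qs ! i \<in> nwa_Q N" using sd i(1) 2(4) nth_mem[of i "drop 1 qs"] by auto
      then show ?thesis using i q0S by (simp add: st_in_Hs)
    qed
  qed
  have "wpa_blab ?A (EB k s (C a g c) qs) = wpa_lab ?A ([?A1] @ ?Eg @ [?A2])" by simp
  also have "\<dots> = tfold (top (\<not> k)) (map (wpa_blab ?A) ([?A1] @ ?Eg @ [?A2]))"
    by (rule lab_tfold[OF junc])
  also have "\<dots> = tfold (top (\<not> k)) ([tsing a] @ map (phin (\<not> k)) g @ [tsing c])"
    using mg by simp
  also have "\<dots> = phin k (C a g c)"
  proof (cases "g = []")
    case False
    have "tfold (top (\<not> k)) ([tsing a] @ [phit (\<not> k) g] @ [tsing c]) = tfold (top (\<not> k)) ([tsing a] @ map (phin (\<not> k)) g @ [tsing c])"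
      unfolding phit.simps by (rule tfold_flat) (use False in simp)
    then show ?thesis using False by simp
  qed simp
  finally show ?case .
next
  case (3 k s qs)
  then show ?case by simp
next
  case (4 k s x f qs)
  have "wpa_blab (AA N b0) (EB k s x qs) = phin k x" using 4 by simp
  moreover have "map (wpa_blab (AA N b0)) (EL k s f (drop (ln x) qs)) = map (phin k) f"
    using 4(2) 4(3,4,5) set_drop_subset[of "ln x" qs] by auto
  ultimately show ?case by simp
qed

lemma EL_lab:
  assumes "set qs \<subseteq> nwa_Q N" "s \<in> QS N" "lf f < length qs" "f \<noteq> []"
  shows "wpa_lab (AA N b0) (EL k s f qs) = phit k f"
proof -
  have junc: "\<forall>b \<in> set (butlast (EL k s f qs)). (bfin b \<in> pa_H (AA N b0)) = k"
  proof
    fix b assume "b \<in> set (butlast (EL k s f qs))"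
    then have bm: "b \<in> set (EL k s f qs)" by (rule in_set_butlastD)
    from EL_junct[OF assms(3) bm] obtain i where i: "i \<le> lf f" "bfin b = st k 1 (qs ! i) s" by blast
    have "qs ! i \<in> nwa_Q N" using assms(1,3) i(1) nth_mem[of i qs] by auto
    then show "(bfin b \<in> pa_H (AA N b0)) = k" using i assms(2) by (simp add: st_in_Hs)
  qed
  show ?thesis using lab_tfold[OF junc] E_lab(2)[OF assms(1-3)] by (simp add: phit.simps)
qed

lemma E_wt:
  fixes x :: "'d node" and f :: "'d node list"
  shows "set qs \<subseteq> nwa_Q N \<Longrightarrow> ln x < length qs \<Longrightarrow> wpa_bwt (AA N b0) (EB k s x qs) = Wt N (fln x) qs"
    "set qs \<subseteq> nwa_Q N \<Longrightarrow> lf f < length qs \<Longrightarrow> wpa_wt (AA N b0) (EL k s f qs) = Wt N (fll f) qs"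
proof (induction k s x qs and k s f qs rule: EB_EL.induct)
  case (1 k s a qs)
  have l: "0 < length qs" "1 < length qs" using 1(2) by auto
  have q0: "qs ! 0 \<in> nwa_Q N" "qs ! 1 \<in> nwa_Q N" using 1(1) nth_mem[OF l(1)] nth_mem[OF l(2)] by blast+
  show ?case using Wt_fl(1)[of "I a" qs N] 1(2) q0 by (simp add: amu_def)
next
  case (2 k s a g c qs)
  have inQ: "qs ! i \<in> nwa_Q N" if "i \<le> lf g + 2" for i using 2(2,3) that nth_mem[of i qs] by auto
  have sd: "set (drop 1 qs) \<subseteq> nwa_Q N" using 2(2) set_drop_subset[of 1 qs] by auto
  have IH: "wpa_wt (AA N b0) (EL (\<not> k) (qs ! 0) g (drop 1 qs)) = Wt N (fll g) (drop 1 qs)"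
    using 2(1)[OF sd] 2(3) by simp
  show ?case
    using Wt_fl(1)[of "C a g c" qs N] 2(3) inQ[of 0] inQ[of 1] inQ[of "lf g + 1"] inQ[of "lf g + 2"] IH
    by (simp add: wpa_wt_append rini_def rfin_def aop_def acl_def amu_def mult.assoc)
next
  case (3 k s qs)
  then show ?case using Wt_fl(2) by simp
next
  case (4 k s x f qs)
  have "wpa_bwt (AA N b0) (EB k s x qs) = Wt N (fln x) qs" using 4 by simp
  moreover have "wpa_wt (AA N b0) (EL k s f (drop (ln x) qs)) = Wt N (fll f) (drop (ln x) qs)"
    using 4(2) 4(3,4) set_drop_subset[of "ln x" qs] by auto
  ultimately show ?case using Wt_fl(3)[of x f qs N] 4(4) by simp
qed

end



lemma E_inj:
  fixes x :: "'d node" and f :: "'d node list"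
  shows "EB k s x qs1 = EB k s x qs2 \<Longrightarrow> length qs1 > ln x \<Longrightarrow> length qs2 > ln x \<Longrightarrow> (\<forall>i \<le> ln x. qs1 ! i = qs2 ! i)"
  "EL k s f qs1 = EL k s f qs2 \<Longrightarrow> length qs1 > lf f \<Longrightarrow> length qs2 > lf f \<Longrightarrow> (\<forall>i. i \<le> lf f \<and> f \<noteq> [] \<longrightarrow> qs1 ! i = qs2 ! i)"
proof (induction k s x qs1 and k s f qs1 arbitrary: qs2 and qs2 rule: EB_EL.induct)
  case (1 k s a qs)
  then show ?case by (auto simp: le_Suc_eq)
next
  case (2 k s a g c qs)
  have e: "qs ! 0 = qs2 ! 0" "qs ! (lf g + 2) = qs2 ! (lf g + 2)" "qs ! 1 = qs2 ! 1"
    using 2(2) by auto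
  have "EL (\<not> k) (qs ! 0) g (drop 1 qs) = EL (\<not> k) (qs2 ! 0) g (drop 1 qs2)"
    using 2(2) by (auto simp: append_eq_append_conv)
  then have "\<forall>i. i \<le> lf g \<and> g \<noteq> [] \<longrightarrow> drop 1 qs ! i = drop 1 qs2 ! i"
    using 2(1)[of "drop 1 qs2"] e(1) 2(3,4) by simp
  then have m: "qs ! (i + 1) = qs2 ! (i + 1)" if "i \<le> lf g" "g \<noteq> []" for i using that 2(3,4) by auto
  show ?case
  proof (intro allI impI)
    fix i assume i: "i \<le> ln (C a g c)"
    show "qs ! i = qs2 ! i"
    proof (cases "i = 0 \<or> i = lf g + 2 \<or> i = 1")
      case True then show ?thesis using e by auto
    next
      case False
      then have "i - 1 \<le> lf g" "i = (i - 1) + 1" "g \<noteq> []" using i by (auto simp: lf_0_iff[symmetric])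
      then show ?thesis using m[of "i - 1"] by metis
    qed
  qed
next
  case (3 k s qs)
  then show ?case by simp
next
  case (4 k s x f qs)
  have a: "\<forall>i \<le> ln x. qs ! i = qs2 ! i" using 4 by simp
  have "\<forall>i. i \<le> lf f \<and> f \<noteq> [] \<longrightarrow> drop (ln x) qs ! i = drop (ln x) qs2 ! i"
    using 4(2)[of "drop (ln x) qs2"] 4(3,4,5) by simp
  then have b: "qs ! (ln x + i) = qs2 ! (ln x + i)" if "i \<le> lf f" "f \<noteq> []" for i using that 4(4,5) by auto
  show ?case
  proof (intro allI impI)
    fix i assume "i \<le> lf (x # f) \<and> x # f \<noteq> []"
    then have "i \<le> ln x \<or> (i - ln x \<le> lf f \<and> i = ln x + (i - ln x) \<and> f \<noteq> [])"
      by (cases "f = []") auto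
    then show "qs ! i = qs2 ! i" using a b by metis
  qed
qed

section \<open>Structure of runs\<close>

fun conn :: "'d blk list \<Rightarrow> bool" where
  "conn [] = True"
| "conn [b] = True"
| "conn (b # c # rs) = (bfin b = bini c \<and> conn (c # rs))"

lemma conn_append: "conn (xs @ ys) \<longleftrightarrow> conn xs \<and> conn ys \<and> (xs \<noteq> [] \<and> ys \<noteq> [] \<longrightarrow> bfin (last xs) = bini (hd ys))"
proof (induction xs rule: conn.induct)
  case 1 then show ?case by simp
next
  case (2 b) then show ?case by (cases ys) auto
next
  case (3 b c rs) then show ?case by auto
qed

lemma conn_Cons: "conn (b # rs) \<longleftrightarrow> conn rs \<and> (rs \<noteq> [] \<longrightarrow> bfin b = bini (hd rs))"
  by (cases rs) auto

definition vbk :: "('d, 'k::comm_semiring_1) wpa \<Rightarrow> 'd blk \<Rightarrow> bool" where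
  "vbk A b = (case b of Atm q1 a q2 \<Rightarrow> (q1 \<in> pa_H A \<and> q2 \<in> pa_H A) \<or> (q1 \<in> pa_V A \<and> q2 \<in> pa_V A)
     | Brk q1 s r q2 \<Rightarrow> wpa_run A r \<and> 2 \<le> length r \<and>
         ((rini r \<in> pa_H A \<and> q1 \<in> pa_V A \<and> q2 \<in> pa_V A) \<or> (rini r \<in> pa_V A \<and> q1 \<in> pa_H A \<and> q2 \<in> pa_H A))
         \<and> s \<in> pa_Om A)"

definition vr :: "('d, 'k::comm_semiring_1) wpa \<Rightarrow> 'd blk list \<Rightarrow> bool" where
  "vr A r = (r \<noteq> [] \<and> conn r \<and> (\<forall>b \<in> set r. vbk A b))"

lemma run_char: "wpa_run A r \<Longrightarrow> vr A r"
proof (induction rule: wpa_run.induct)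
  case (atom q1 q2 a)
  then show ?case by (simp add: vr_def vbk_def)
next
  case (cat r1 r2)
  then show ?case by (auto simp: vr_def conn_append rini_def rfin_def)
next
  case (br r1 r2 q1 q2 s)
  have ne: "r1 \<noteq> []" "r2 \<noteq> []" using br by (auto simp: vr_def)
  have "wpa_run A (r1 @ r2)" using br.hyps by (auto intro: wpa_run.cat)
  moreover have "rini (r1 @ r2) = rini r1" using ne by (simp add: rini_def)
  moreover have "2 \<le> length (r1 @ r2)" using ne by (cases r1; cases r2) auto
  ultimately show ?case using br.hyps by (simp add: vr_def vbk_def)
qed

lemma vr_append: "vr A (xs @ ys) \<Longrightarrow> xs \<noteq> [] \<Longrightarrow> vr A xs" "vr A (xs @ ys) \<Longrightarrow> ys \<noteq> [] \<Longrightarrow> vr A ys"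
  by (auto simp: vr_def conn_append)

fun bsz :: "'d blk \<Rightarrow> nat" and lsz :: "'d blk list \<Rightarrow> nat" where
  "bsz (Atm q1 a q2) = 1"
| "bsz (Brk q1 s r q2) = Suc (lsz r)"
| "lsz [] = 0"
| "lsz (b # rs) = bsz b + lsz rs"

lemma lsz_append[simp]: "lsz (xs @ ys) = lsz xs + lsz ys"
  by (induction xs) auto

lemma bsz_pos: "bsz b \<ge> 1"
  by (cases b) auto

lemma prod_nz: "(a::'k::comm_semiring_1) * b \<noteq> 0 \<Longrightarrow> a \<noteq> 0 \<and> b \<noteq> 0"
  by auto

context
  fixes N :: "('d, 'k::comm_semiring_1) wnwa"
begin

lemma amu_nz: "amu N x a y \<noteq> 0 \<Longrightarrow> dq x \<in> nwa_Q N \<and> dq y \<in> nwa_Q N \<and> ds x = ds y \<and>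
   ((dp x = 0 \<and> dp y = 1 \<and> amu N x a y = nwa_call N (dq x) a (dq y)) \<or> (dp x = 1 \<and> dp y = 1) \<or>
    (dp x = 1 \<and> dp y = 2 \<and> amu N x a y = nwa_ret N (dq x) (ds x) a (dq y)))"
  unfolding amu_def by (auto split: if_splits)

lemma aop_nz: "aop x s y \<noteq> (0::'k) \<Longrightarrow> dp x = 1 \<and> dp y = 0 \<and> s = ds x \<and> dq y = dq x \<and> ds y = dq x"
  unfolding aop_def by (auto split: if_splits)

lemma acl_nz: "acl x s y \<noteq> (0::'k) \<Longrightarrow> dp x = 2 \<and> dp y = 1 \<and> s = ds y \<and> dq y = dq x"
  unfolding acl_def by (auto split: if_splits)

lemma HV_dec: "x \<in> Hs N True \<union> Hs N False \<Longrightarrow> x = st (dk x) (dp x) (dq x) (ds x) \<and> dp x < 3 \<and> dq x \<in> nwa_Q N \<and> ds x \<in> QS N"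
  by (auto dest: Hs_dec)

lemma H_dk: "x \<in> Hs N k \<Longrightarrow> dk x = k"
  by (auto dest: Hs_dec)

end



context
  fixes N :: "('d, 'k::comm_semiring_1) wnwa" and b0 :: bool
begin

abbreviation "AN \<equiv> AA N b0"

definition resL :: "'d blk list \<Rightarrow> bool" where
  "resL r \<longleftrightarrow> (\<exists>f qs. f \<noteq> [] \<and> length qs = lf f + 1 \<and> set qs \<subseteq> nwa_Q N \<and>
     r = EL (dk (rini r)) (ds (rini r)) f qs \<and> qs ! 0 = dq (rini r) \<and> qs ! lf f = dq (rfin r) \<and>
     ds (rfin r) = ds (rini r) \<and> dk (rfin r) = dk (rini r))"

definition resB :: "'d blk \<Rightarrow> bool" where
  "resB b \<longleftrightarrow> (\<exists>x qs. length qs = ln x + 1 \<and> set qs \<subseteq> nwa_Q N \<and>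
     b = EB (dk (bini b)) (ds (bini b)) x qs \<and> qs ! 0 = dq (bini b) \<and> qs ! ln x = dq (bfin b) \<and>
     ds (bfin b) = ds (bini b) \<and> dk (bfin b) = dk (bini b))"

lemma atm_states:
  assumes "vbk AN (Atm y a z)"
  shows "y \<in> Hs N True \<union> Hs N False" "z \<in> Hs N True \<union> Hs N False" "dk z = dk y"
  using assms H_dk[of y N True] H_dk[of z N True] H_dk[of y N False] H_dk[of z N False]
  by (auto simp: vbk_def)

lemma L_out:
  assumes "vbk AN b" "wpa_bwt AN b \<noteq> 0" "dp (bini b) = 1"
  shows "dp (bfin b) = 1 \<or> dp (bfin b) = 2"
proof (cases b)
  case (Atm y a z)
  then show ?thesis using assms amu_nz[of N y a z] by auto
next
  case (Brk y s r z)
  then show ?thesis using assms acl_nz[of "rfin r" s z] by (auto dest: prod_nz)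
qed

lemma L_in:
  assumes "wpa_bwt AN b \<noteq> 0"
  shows "dp (bini b) = 0 \<or> dp (bini b) = 1"
proof (cases b)
  case (Atm y a z)
  then show ?thesis using assms amu_nz[of N y a z] by auto
next
  case (Brk y s r z)
  then show ?thesis using assms aop_nz[of y s "rini r"] by (auto dest: prod_nz)
qed

lemma BA:
  assumes IH: "\<And>r'. lsz r' < bsz b \<Longrightarrow> vr AN r' \<Longrightarrow> wpa_wt AN r' \<noteq> 0 \<Longrightarrow> dp (rini r') = 1 \<Longrightarrow> dp (rfin r') = 1 \<Longrightarrow> resL r'"
    and vb: "vbk AN b" and nz: "wpa_bwt AN b \<noteq> 0" and d1: "dp (bini b) = 1" and d2: "dp (bfin b) = 1"
  shows "resB b"
proof (cases b)
  case (Atm y a z)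
  note S = atm_states[OF vb[unfolded Atm]]
  have m: "dq y \<in> nwa_Q N" "dq z \<in> nwa_Q N" "ds y = ds z" using amu_nz[of N y a z] nz Atm by auto
  have y: "y = st (dk y) 1 (dq y) (ds y)" using HV_dec[OF S(1)] d1 Atm by simp
  have z: "z = st (dk y) 1 (dq z) (ds y)" using HV_dec[OF S(2)] d2 Atm S(3) m(3) by simp
  have e: "EB (dk y) (ds y) (I a) [dq y, dq z] = Atm y a z"
  proof -
    have n1: "[dq y, dq z] ! 1 = dq z" by simp
    show ?thesis by (simp only: EB.simps nth_Cons_0 n1 y[symmetric] z[symmetric])
  qed
  show ?thesis unfolding resB_def Atm
    by (rule exI[of _ "I a"], rule exI[of _ "[dq y, dq z]"]) (use m S(3) e in simp)
next
  case (Brk y s r z)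
  let ?A = AN
  have run: "wpa_run ?A r" and len2: "2 \<le> length r" and sO: "s \<in> QS N"
    and kinds: "(rini r \<in> Hs N True \<and> y \<in> Hs N False \<and> z \<in> Hs N False) \<or> (rini r \<in> Hs N False \<and> y \<in> Hs N True \<and> z \<in> Hs N True)"
    using vb Brk by (auto simp: vbk_def)
  define k where "k = dk y"
  have kz: "dk z = k" and kr: "dk (rini r) = (\<not> k)" and yHV: "y \<in> Hs N True \<union> Hs N False" and zHV: "z \<in> Hs N True \<union> Hs N False"
    using kinds H_dk[of y N True] H_dk[of z N True] H_dk[of y N False] H_dk[of z N False]
      H_dk[of "rini r" N True] H_dk[of "rini r" N False] unfolding k_def by auto
  have nz3: "aop y s (rini r) \<noteq> (0::'k)" "wpa_wt ?A r \<noteq> 0" "acl (rfin r) s z \<noteq> (0::'k)"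
    using nz Brk by (auto dest: prod_nz)
  note op = aop_nz[OF nz3(1)] and cl = acl_nz[OF nz3(3)]
  have vrr: "vr ?A r" by (rule run_char[OF run])
  obtain b1 r' where r: "r = b1 # r'" using len2 by (cases r) auto
  have r'ne: "r' \<noteq> []" using len2 r by auto
  obtain rm bl where r': "r' = rm @ [bl]" using r'ne by (metis append_butlast_last_id)
  have rr: "r = [b1] @ rm @ [bl]" using r r' by simp
  have wtr: "wpa_wt ?A r = wpa_bwt ?A b1 * wpa_wt ?A rm * wpa_bwt ?A bl"
    unfolding rr by (simp add: wpa_wt_append mult.assoc)
  have nzb1: "wpa_bwt ?A b1 \<noteq> 0" and nzrm: "wpa_wt ?A rm \<noteq> 0" and nzbl: "wpa_bwt ?A bl \<noteq> 0"
    using nz3(2) unfolding wtr by (auto dest: prod_nz)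
  have ini: "rini r = bini b1" using rr by (simp add: rini_def)
  have fin: "rfin r = bfin bl" using rr by (simp add: rfin_def)
  have vb1: "vbk ?A b1" and vbl: "vbk ?A bl" using vrr rr by (auto simp: vr_def)
  have connr: "conn ([b1] @ rm @ [bl])" using vrr rr by (simp add: vr_def)
  obtain y1 a z1 where b1: "b1 = Atm y1 a z1"
  proof (cases b1)
    case (Brk y' s' r'' z')
    then have "aop y' s' (rini r'') \<noteq> (0::'k)" using nzb1 by (auto dest: prod_nz)
    then have "dp y' = 1" using aop_nz by blast
    then show ?thesis using op ini Brk by simp
  qed
  obtain y2 c z2 where bl: "bl = Atm y2 c z2"
  proof (cases bl)
    case (Brk y' s' r'' z')
    then have "acl (rfin r'') s' z' \<noteq> (0::'k)" using nzbl by (auto dest: prod_nz)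
    then have "dp z' = 1" using acl_nz by blast
    then show ?thesis using cl fin Brk by simp
  qed
  note S1 = atm_states[OF vb1[unfolded b1]] and S2 = atm_states[OF vbl[unfolded bl]]
  have a1: "amu N y1 a z1 \<noteq> 0" using nzb1 b1 by simp
  have a2: "amu N y2 c z2 \<noteq> 0" using nzbl bl by simp
  have y1: "y1 = rini r" using ini b1 by simp
  have z2: "z2 = rfin r" using fin bl by simp
  have A1: "dq z1 \<in> nwa_Q N" "ds z1 = dq y" "dp z1 = 1" "dk z1 = (\<not> k)" "dq y1 = dq y" "ds y1 = dq y" "dp y1 = 0"
    using amu_nz[OF a1] op y1 S1(3) kr by auto
  have A2: "dq y2 \<in> nwa_Q N" "dq z2 \<in> nwa_Q N" "ds y2 = ds z2" "dp y2 = 1" "dp z2 = 2" "dk z2 = dk y2"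
    using amu_nz[OF a2] cl z2 S2(3) by auto
  obtain g qsg where G: "length qsg = lf g + 1" "set qsg \<subseteq> nwa_Q N" "rm = EL (\<not> k) (dq y) g qsg"
    "qsg ! 0 = dq z1" "qsg ! lf g = dq y2" "ds y2 = dq y" "dk y2 = (\<not> k)"
  proof (cases "rm = []")
    case True
    then have "z1 = y2" using connr b1 bl by simp
    then show ?thesis using that[of "[dq z1]" "[]"] True A1 by simp
  next
    case False
    have vrm: "vr ?A rm" using vrr rr False vr_append by (metis append_Cons append_Nil list.simps(3))
    have c1: "bfin b1 = bini (hd rm)" and c2: "bfin (last rm) = bini bl"
      using connr False by (auto simp: conn_append conn_Cons simp del: conn.simps)
    have ri: "rini rm = z1" using c1 b1 by (simp add: rini_def)
    have rf: "rfin rm = y2" using c2 bl by (simp add: rfin_def)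
    have "lsz rm < bsz b" using Brk rr by simp
    then have "resL rm" using IH vrm nzrm ri rf A1(3) A2(4) by simp
    then obtain g qsg where "length qsg = lf g + 1" "set qsg \<subseteq> nwa_Q N" "rm = EL (dk z1) (ds z1) g qsg"
      "qsg ! 0 = dq z1" "qsg ! lf g = dq y2" "ds y2 = ds z1" "dk y2 = dk z1"
      unfolding resL_def ri rf by blast
    then show ?thesis using that A1 by simp
  qed
  define qs where "qs = dq y # qsg @ [dq z2]"
  have q: "qs ! 0 = dq y" "qs ! 1 = dq z1" "qs ! (lf g + 1) = dq y2" "qs ! (lf g + 2) = dq z2" "drop 1 qs = qsg @ [dq z2]"
    unfolding qs_def using G by (auto simp: nth_append)
  have ELq: "EL (\<not> k) (dq y) g (drop 1 qs) = rm"
    unfolding q(5) G(3) by (rule E_cong(2)) (use G(1) in \<open>auto simp: nth_append\<close>)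
  have Y: "y = st k 1 (dq y) (ds y)" using HV_dec[OF yHV] d1 Brk k_def by simp
  have Y1: "y1 = st (\<not> k) 0 (dq y) (dq y)" using HV_dec[OF S1(1)] A1 y1 kr by simp
  have Z1: "z1 = st (\<not> k) 1 (dq z1) (dq y)" using HV_dec[OF S1(2)] A1 by simp
  have Y2: "y2 = st (\<not> k) 1 (dq y2) (dq y)" using HV_dec[OF S2(1)] A2 G by simp
  have Z2: "z2 = st (\<not> k) 2 (dq z2) (dq y)" using HV_dec[OF S2(2)] A2 G by simp
  have Z: "z = st k 1 (dq z2) (ds y)" using HV_dec[OF zHV] cl op z2 kz by simp
  have sy: "s = ds y" using op by simp
  have "b = EB k (ds y) (C a g c) qs"
    using q ELq unfolding Brk rr b1 bl sy by (simp only: EB.simps) (metis Y Y1 Z1 Y2 Z2 Z)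
  moreover have "set qs \<subseteq> nwa_Q N" unfolding qs_def using G(2) A2(2) HV_dec[OF yHV] by auto
  moreover have "length qs = ln (C a g c) + 1" unfolding qs_def using G(1) by simp
  ultimately show ?thesis unfolding resB_def using q Brk k_def kz cl z2 sy
    by (intro exI[of _ "C a g c"] exI[of _ qs]) simp
qed

end



context
  fixes N :: "('d, 'k::comm_semiring_1) wnwa" and b0 :: bool
begin

lemma ANA_aux:
  "\<forall>r. lsz r < n \<longrightarrow> vr (AN N b0) r \<longrightarrow> wpa_wt (AN N b0) r \<noteq> 0 \<longrightarrow> dp (rini r) = 1 \<longrightarrow> dp (rfin r) = 1 \<longrightarrow> resL N r"
proof (induction n rule: less_induct)
  case (less n)
  let ?A = "AN N b0"
  show ?case
  proof (intro allI impI)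
    fix r :: "'d blk list"
    assume sz: "lsz r < n" and vrr: "vr ?A r" and nz: "wpa_wt ?A r \<noteq> 0" and d1: "dp (rini r) = 1" and d2: "dp (rfin r) = 1"
    obtain b rest where r: "r = b # rest" using vrr by (cases r) (auto simp: vr_def)
    have vb: "vbk ?A b" using vrr r by (simp add: vr_def)
    have nzb: "wpa_bwt ?A b \<noteq> 0" and nzr: "wpa_wt ?A rest \<noteq> 0" using nz r by (auto dest: prod_nz)
    have bi: "bini b = rini r" using r by (simp add: rini_def)
    have IHb: "resL N r'" if "lsz r' < bsz b" "vr ?A r'" "wpa_wt ?A r' \<noteq> 0" "dp (rini r') = 1" "dp (rfin r') = 1" for r'
    proof -
      have "lsz r' < lsz r" using that(1) r by simp
      then show ?thesis using less.IH[OF sz, rule_format, of r'] that by blast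
    qed
    show "resL N r"
    proof (cases "rest = []")
      case True
      have "bfin b = rfin r" using r True by (simp add: rfin_def)
      then have "resB N b" using BA[OF IHb vb nzb] bi d1 d2 by simp
      then obtain x qs where X: "length qs = ln x + 1" "set qs \<subseteq> nwa_Q N" "b = EB (dk (bini b)) (ds (bini b)) x qs"
        "qs ! 0 = dq (bini b)" "qs ! ln x = dq (bfin b)" "ds (bfin b) = ds (bini b)" "dk (bfin b) = dk (bini b)"
        unfolding resB_def by blast
      have "r = EL (dk (rini r)) (ds (rini r)) [x] qs" using X(3) r True bi by simp
      then show ?thesis unfolding resL_def using X r True bi \<open>bfin b = rfin r\<close>
        by (intro exI[of _ "[x]"] exI[of _ qs]) simp
    next
      case False
      obtain c rs where rest: "rest = c # rs" using False by (cases rest) auto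
      have conn: "bfin b = bini c" using vrr r rest by (simp add: vr_def)
      have nzc: "wpa_bwt ?A c \<noteq> 0" using nzr rest by (auto dest: prod_nz)
      have vc: "vbk ?A c" using vrr r rest by (simp add: vr_def)
      have cHV: "bini c \<in> Hs N True \<union> Hs N False"
      proof (cases c)
        case (Atm y a z) then show ?thesis using atm_states[of N b0 y a z] vc by simp
      next
        case (Brk y s r' z) then show ?thesis using vc by (auto simp: vbk_def)
      qed
      have "dp (bfin b) = 1 \<or> dp (bfin b) = 2" using L_out[OF vb nzb] bi d1 by simp
      moreover have "dp (bini c) = 0 \<or> dp (bini c) = 1" using L_in[OF nzc] .
      ultimately have db: "dp (bfin b) = 1" using conn by auto
      have "resB N b" using BA[OF IHb vb nzb] bi d1 db by simp
      then obtain x qsb where X: "length qsb = ln x + 1" "set qsb \<subseteq> nwa_Q N" "b = EB (dk (bini b)) (ds (bini b)) x qsb"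
        "qsb ! 0 = dq (bini b)" "qsb ! ln x = dq (bfin b)" "ds (bfin b) = ds (bini b)" "dk (bfin b) = dk (bini b)"
        unfolding resB_def by blast
      have vrest: "vr ?A rest" using vrr r False vr_append[of ?A "[b]" rest] by simp
      have ri: "rini rest = bfin b" using rest conn by (simp add: rini_def)
      have rf: "rfin rest = rfin r" using r False by (simp add: rfin_def)
      have "lsz rest < lsz r" using r bsz_pos[of b] by simp
      then have "resL N rest" using less.IH[OF sz, rule_format, of rest] vrest nzr ri rf db d2 by simp
      then obtain f' qs' where F: "f' \<noteq> []" "length qs' = lf f' + 1" "set qs' \<subseteq> nwa_Q N"
        "rest = EL (dk (rini rest)) (ds (rini rest)) f' qs'" "qs' ! 0 = dq (rini rest)" "qs' ! lf f' = dq (rfin rest)"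
        "ds (rfin rest) = ds (rini rest)" "dk (rfin rest) = dk (rini rest)"
        unfolding resL_def by blast
      define qs where "qs = take (ln x) qsb @ qs'"
      have lt: "length (take (ln x) qsb) = ln x" using X(1) by simp
      have dq: "drop (ln x) qs = qs'" unfolding qs_def using lt by simp
      have EBq: "EB (dk (bini b)) (ds (bini b)) x qs = b"
      proof -
        have "EB (dk (bini b)) (ds (bini b)) x qs = EB (dk (bini b)) (ds (bini b)) x qsb"
        proof (rule E_cong(1))
          fix i assume i: "i \<le> ln x"
          show "qs ! i = qsb ! i"
          proof (cases "i < ln x")
            case True then show ?thesis unfolding qs_def using lt by (simp add: nth_append)
          next
            case False
            then have "i = ln x" using i by simp
            then show ?thesis unfolding qs_def using lt F(5) ri X(5) by (simp add: nth_append)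
          qed
        qed (use X(1) F(2) in \<open>auto simp: qs_def\<close>)
        then show ?thesis using X(3) by simp
      qed
      have "r = EL (dk (rini r)) (ds (rini r)) (x # f') qs"
        using EBq dq F(4) ri X(6,7) r bi by simp
      moreover have "qs ! 0 = dq (rini r)"
        unfolding qs_def using lt ln_pos[of x] X(4) bi by (simp add: nth_append)
      moreover have "qs ! lf (x # f') = dq (rfin r)"
        unfolding qs_def using lt F(6) rf by (simp add: nth_append)
      moreover have "set qs \<subseteq> nwa_Q N" unfolding qs_def using X(2) F(3) set_take_subset[of "ln x" qsb] by auto
      moreover have "length qs = lf (x # f') + 1" unfolding qs_def using lt F(2) by simp
      ultimately show ?thesis unfolding resL_def using F(7,8) ri rf X(6,7) bi
        by (intro exI[of _ "x # f'"] exI[of _ qs]) simp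
    qed
  qed
qed

lemma ANA:
  "wpa_run (AN N b0) r \<Longrightarrow> wpa_wt (AN N b0) r \<noteq> 0 \<Longrightarrow> dp (rini r) = 1 \<Longrightarrow> dp (rfin r) = 1 \<Longrightarrow> resL N r"
  using ANA_aux[of "Suc (lsz r)"] run_char by blast

end



lemma lab_len_Cons: "length (fst (wpa_lab A (b # rs))) = length (fst (wpa_blab A b)) + length (fst (wpa_lab A rs))"
  by (cases rs) (auto simp: tcirc_def tbul_def)

lemma lab_len_append: "length (fst (wpa_lab A (r1 @ r2))) = length (fst (wpa_lab A r1)) + length (fst (wpa_lab A r2))"
  by (induction r1) (simp_all add: lab_len_Cons)

lemma run_size: fixes A :: "('d, 'k::comm_semiring_1) wpa" shows "wpa_run A r \<Longrightarrow> lsz r + length r \<le> 2 * length (fst (wpa_lab A r))"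
proof (induction rule: wpa_run.induct)
  case (atom q1 q2 a)
  then show ?case by (simp add: tsing_def)
next
  case (cat r1 r2)
  then show ?case by (simp add: lab_len_append)
next
  case (br r1 r2 q1 q2 s)
  have "vr A r1" by (rule run_char[OF br.hyps(1)])
  moreover have "vr A r2" by (rule run_char[OF br.hyps(2)])
  ultimately have "r1 \<noteq> []" "r2 \<noteq> []" by (auto simp: vr_def)
  then have "length r1 \<ge> 1" "length r2 \<ge> 1" by (auto simp: Suc_le_eq)
  then show ?case using br.IH by (simp add: lab_len_append)
qed

lemma finite_runs:
  fixes A :: "('d::finite, 'k::comm_semiring_1) wpa"
  assumes fS: "finite (pa_H A \<union> pa_V A)" and fO: "finite (pa_Om A)"
  shows "finite {r. wpa_run A r \<and> lsz r \<le> n}"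
proof -
  let ?S = "pa_H A \<union> pa_V A"
  let ?B = "\<lambda>n. {b. vbk A b \<and> bsz b \<le> n}"
  let ?L = "\<lambda>n. {r. wpa_run A r \<and> lsz r \<le> n}"
  have LB: "?L n \<subseteq> {xs. set xs \<subseteq> ?B n \<and> length xs \<le> n}" for n
  proof
    fix r assume "r \<in> ?L n"
    then have r: "wpa_run A r" "lsz r \<le> n" by auto
    have mem: "b \<in> set r \<Longrightarrow> bsz b \<le> lsz r" for b
      by (induction r) auto
    have "length r \<le> lsz r"
    proof (induction r)
      case (Cons a r) then show ?case using bsz_pos[of a] by simp
    qed simp
    moreover have "\<forall>b\<in>set r. vbk A b" using run_char[OF r(1)] by (simp add: vr_def)
    ultimately show "r \<in> {xs. set xs \<subseteq> ?B n \<and> length xs \<le> n}" using r(2) mem by fastforce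
  qed
  have fB: "finite (?B n)" for n
  proof (induction n)
    case 0
    have nz: "bsz b \<noteq> 0" for b :: "'d blk" using bsz_pos[of b] by simp
    have e: "?B 0 = {}" using nz by simp
    show ?case unfolding e by (rule finite.emptyI)
  next
    case (Suc m)
    have fL: "finite (?L m)" by (rule finite_subset[OF LB finite_lists_length_le[OF Suc.IH]])
    have "?B (Suc m) \<subseteq> (\<lambda>(q1, a, q2). Atm q1 a q2) ` (?S \<times> UNIV \<times> ?S)
        \<union> (\<lambda>(q1, s, r, q2). Brk q1 s r q2) ` (?S \<times> pa_Om A \<times> ?L m \<times> ?S)"
    proof
      fix b assume bm: "b \<in> ?B (Suc m)"
      show "b \<in> (\<lambda>(q1, a, q2). Atm q1 a q2) ` (?S \<times> UNIV \<times> ?S) \<union> (\<lambda>(q1, s, r, q2). Brk q1 s r q2) ` (?S \<times> pa_Om A \<times> ?L m \<times> ?S)"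
      proof (cases b)
        case (Atm q1 a q2)
        then have "q1 \<in> ?S" "q2 \<in> ?S" using bm by (auto simp: vbk_def)
        then show ?thesis using Atm by (intro UnI1 rev_image_eqI[of "(q1, a, q2)"]) auto
      next
        case (Brk q1 s r q2)
        then have "q1 \<in> ?S" "q2 \<in> ?S" "s \<in> pa_Om A" "r \<in> ?L m" using bm by (auto simp: vbk_def)
        then show ?thesis using Brk by (intro UnI2 rev_image_eqI[of "(q1, s, r, q2)"]) auto
      qed
    qed
    moreover have "finite ((\<lambda>(q1, a, q2). Atm q1 a q2) ` (?S \<times> (UNIV :: 'd set) \<times> ?S)
        \<union> (\<lambda>(q1, s, r, q2). Brk q1 s r q2) ` (?S \<times> pa_Om A \<times> ?L m \<times> ?S))"
      using fS fO fL by simp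
    ultimately show ?case by (rule finite_subset)
  qed
  show ?thesis by (rule finite_subset[OF LB finite_lists_length_le[OF fB]])
qed



context
  fixes N :: "('d::finite, 'k::comm_semiring_1) wnwa" and b0 :: bool
begin

definition Rset :: "nat \<Rightarrow> nat \<Rightarrow> 'd tx \<Rightarrow> 'd blk list set" where
  "Rset q1 q2 \<tau> = {r. wpa_run (AN N b0) r \<and> rini r = q1 \<and> rfin r = q2 \<and> wpa_lab (AN N b0) r = \<tau>}"

definition QSet :: "'d node list \<Rightarrow> nat \<Rightarrow> nat \<Rightarrow> nat list set" where
  "QSet f q q' = {qs. length qs = lf f + 1 \<and> set qs \<subseteq> nwa_Q N \<and> qs ! 0 = q \<and> qs ! lf f = q'}"

lemma QS0: "0 \<in> QS N" by (simp add: QS_def)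

lemma top_runs_nz:
  assumes r: "r \<in> Rset (st b0 1 q 0) (st b0 1 q' 0) \<tau>" and nz: "wpa_wt (AN N b0) r \<noteq> 0"
  shows "\<exists>f qs. f \<noteq> [] \<and> qs \<in> QSet f q q' \<and> r = EL b0 0 f qs \<and> \<tau> = phit b0 f"
proof -
  have run: "wpa_run (AN N b0) r" and ri: "rini r = st b0 1 q 0" and rf: "rfin r = st b0 1 q' 0"
    and lab: "wpa_lab (AN N b0) r = \<tau>" using r by (auto simp: Rset_def)
  have "resL N r" by (rule ANA[OF run nz]) (simp_all add: ri rf)
  then obtain f qs where F: "f \<noteq> []" "length qs = lf f + 1" "set qs \<subseteq> nwa_Q N"
    "r = EL b0 0 f qs" "qs ! 0 = q" "qs ! lf f = q'"
    unfolding resL_def ri rf by auto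
  have "wpa_lab (AN N b0) (EL b0 0 f qs) = phit b0 f" by (rule EL_lab) (use F QS0 in auto)
  then show ?thesis using F lab unfolding QSet_def by (intro exI[of _ f] exI[of _ qs]) auto
qed

lemma Rset_finite:
  assumes fQ: "finite (nwa_Q N)"
  shows "finite (Rset q1 q2 \<tau>)"
proof (rule finite_subset)
  show "Rset q1 q2 \<tau> \<subseteq> {r. wpa_run (AN N b0) r \<and> lsz r \<le> 2 * length (fst \<tau>)}"
    using run_size unfolding Rset_def by fastforce
  show "finite {r. wpa_run (AN N b0) r \<and> lsz r \<le> 2 * length (fst \<tau>)}"
    by (rule finite_runs) (use fQ Hs_finite in \<open>auto simp: QS_def\<close>)
qed

lemma Rsum_bad:
  assumes "\<forall>f. f \<noteq> [] \<longrightarrow> \<tau> \<noteq> phit b0 f"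
  shows "(\<Sum>r \<in> Rset (st b0 1 q 0) (st b0 1 q' 0) \<tau>. wpa_wt (AN N b0) r) = 0"
proof (rule sum.neutral, rule ballI, rule ccontr)
  fix r assume "r \<in> Rset (st b0 1 q 0) (st b0 1 q' 0) \<tau>" "wpa_wt (AN N b0) r \<noteq> 0"
  from top_runs_nz[OF this] show False using assms by blast
qed

lemma Rsum_good:
  assumes fQ: "finite (nwa_Q N)" and f0: "f0 \<noteq> []" and tau: "\<tau> = phit b0 f0"
  shows "(\<Sum>r \<in> Rset (st b0 1 q 0) (st b0 1 q' 0) \<tau>. wpa_wt (AN N b0) r) = (\<Sum>qs \<in> QSet f0 q q'. Wt N (fll f0) qs)"
proof -
  let ?R = "Rset (st b0 1 q 0) (st b0 1 q' 0) \<tau>"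
  let ?E = "EL b0 0 f0 ` QSet f0 q q'"
  have sub: "?E \<subseteq> ?R"
  proof
    fix r assume "r \<in> ?E"
    then obtain qs where qs: "qs \<in> QSet f0 q q'" "r = EL b0 0 f0 qs" by blast
    have l: "lf f0 < length qs" "set qs \<subseteq> nwa_Q N" using qs by (auto simp: QSet_def)
    have "wpa_run (AN N b0) r" using E_run(2)[OF l(2) QS0 l(1) f0] qs by simp
    moreover have "rini r = st b0 1 q 0" "rfin r = st b0 1 q' 0" using EL_ends[OF f0 l(1)] qs by (auto simp: QSet_def)
    moreover have "wpa_lab (AN N b0) r = \<tau>" using EL_lab[OF l(2) QS0 l(1) f0] qs tau by simp
    ultimately show "r \<in> ?R" by (simp add: Rset_def)
  qed
  have zero: "\<forall>r \<in> ?R - ?E. wpa_wt (AN N b0) r = 0"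
  proof (rule ballI, rule ccontr)
    fix r assume r: "r \<in> ?R - ?E" and nz: "wpa_wt (AN N b0) r \<noteq> 0"
    from top_runs_nz[OF _ nz] r obtain f qs where F: "f \<noteq> []" "qs \<in> QSet f q q'" "r = EL b0 0 f qs" "\<tau> = phit b0 f"
      by blast
    have "phit b0 f = phit b0 f0" using F(4) tau by simp
    then have "f = f0" by (rule phit_inj[OF F(1) f0])
    then show False using r F by blast
  qed
  have "(\<Sum>r \<in> ?R. wpa_wt (AN N b0) r) = (\<Sum>r \<in> ?E. wpa_wt (AN N b0) r)"
    by (rule sum.mono_neutral_right[OF Rset_finite[OF fQ] sub zero])
  also have "\<dots> = (\<Sum>qs \<in> QSet f0 q q'. wpa_wt (AN N b0) (EL b0 0 f0 qs))"
  proof (rule sum.reindex[unfolded comp_def])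
    show "inj_on (EL b0 0 f0) (QSet f0 q q')"
    proof (rule inj_onI)
      fix qs1 qs2 assume q1: "qs1 \<in> QSet f0 q q'" and q2: "qs2 \<in> QSet f0 q q'" and e: "EL b0 0 f0 qs1 = EL b0 0 f0 qs2"
      have l: "length qs1 = lf f0 + 1" "length qs2 = lf f0 + 1" using q1 q2 by (auto simp: QSet_def)
      have "\<forall>i. i \<le> lf f0 \<and> f0 \<noteq> [] \<longrightarrow> qs1 ! i = qs2 ! i" by (rule E_inj(2)[OF e]) (use l in auto)
      then show "qs1 = qs2" using l f0 by (intro nth_equalityI) auto
    qed
  qed
  also have "\<dots> = (\<Sum>qs \<in> QSet f0 q q'. Wt N (fll f0) qs)"
    by (rule sum.cong[OF refl], rule E_wt(2)) (auto simp: QSet_def)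
  finally show ?thesis .
qed

end



lemma regroup:
  fixes h :: "nat list \<Rightarrow> 'k::comm_monoid_add"
  assumes fQ: "finite Q"
  shows "(\<Sum>qs \<in> {qs. length qs = Suc n \<and> set qs \<subseteq> Q}. h qs)
    = (\<Sum>q\<in>Q. \<Sum>q'\<in>Q. \<Sum>qs \<in> {qs. length qs = Suc n \<and> set qs \<subseteq> Q \<and> qs ! 0 = q \<and> qs ! n = q'}. h qs)"
proof -
  let ?ALL = "{qs. length qs = Suc n \<and> set qs \<subseteq> Q}"
  let ?g = "\<lambda>qs. (qs ! 0, qs ! n)"
  have fA: "finite ?ALL" using finite_lists_length_eq[OF fQ, of "Suc n"] by (simp add: conj_commute)
  have img: "?g ` ?ALL \<subseteq> Q \<times> Q" by (auto intro!: nth_mem)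
  have "(\<Sum>qs \<in> ?ALL. h qs) = (\<Sum>p \<in> Q \<times> Q. \<Sum>qs \<in> {x. x \<in> ?ALL \<and> ?g x = p}. h qs)"
    by (rule sum.group[OF fA _ img, symmetric]) (simp add: fQ)
  also have "\<dots> = (\<Sum>q\<in>Q. \<Sum>q'\<in>Q. \<Sum>qs \<in> {x. x \<in> ?ALL \<and> ?g x = (q, q')}. h qs)"
    by (rule sum.cartesian_product')
  also have "\<dots> = (\<Sum>q\<in>Q. \<Sum>q'\<in>Q. \<Sum>qs \<in> {qs. length qs = Suc n \<and> set qs \<subseteq> Q \<and> qs ! 0 = q \<and> qs ! n = q'}. h qs)"
    by (intro sum.cong refl) auto
  finally show ?thesis .
qed

context
  fixes N :: "('d::finite, 'k::comm_semiring_1) wnwa" and b0 :: bool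
begin

lemma sum_top:
  assumes fQ: "finite (nwa_Q N)"
    and z: "\<And>x. x \<in> Hs N True \<union> Hs N False \<Longrightarrow> x \<notin> (\<lambda>q. st b0 1 q 0) ` nwa_Q N \<Longrightarrow> g x = 0"
  shows "sum g (Hs N True \<union> Hs N False) = (\<Sum>q\<in>nwa_Q N. g (st b0 1 q 0))"
proof -
  have sub: "(\<lambda>q. st b0 1 q 0) ` nwa_Q N \<subseteq> Hs N True \<union> Hs N False"
    using QS0[of N] by (cases b0) (auto simp: st_in_Hs)
  have fin: "finite (Hs N True \<union> Hs N False)" using Hs_finite[OF fQ] by simp
  have "sum g (Hs N True \<union> Hs N False) = sum g ((\<lambda>q. st b0 1 q 0) ` nwa_Q N)"
    by (rule sum.mono_neutral_right[OF fin sub]) (use z in blast)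
  also have "\<dots> = (\<Sum>q\<in>nwa_Q N. g (st b0 1 q 0))"
    by (rule sum.reindex[unfolded comp_def]) (auto intro: inj_onI)
  finally show ?thesis .
qed

lemma alam_nz: "alam N b0 x \<noteq> 0 \<Longrightarrow> x \<in> (\<lambda>q. st b0 1 q 0) ` nwa_Q N"
proof -
  assume "alam N b0 x \<noteq> 0"
  then have x: "x \<in> Hs N b0" "dp x = 1" "ds x = 0" by (auto simp: alam_def split: if_splits)
  then have "x = st b0 1 (dq x) 0" "dq x \<in> nwa_Q N" using Hs_dec[OF x(1)] by auto
  then show ?thesis by blast
qed

lemma agam_nz: "agam N b0 x \<noteq> 0 \<Longrightarrow> x \<in> (\<lambda>q. st b0 1 q 0) ` nwa_Q N"
proof -
  assume "agam N b0 x \<noteq> 0"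
  then have x: "x \<in> Hs N b0" "dp x = 1" "ds x = 0" by (auto simp: agam_def split: if_splits)
  then have "x = st b0 1 (dq x) 0" "dq x \<in> nwa_Q N" using Hs_dec[OF x(1)] by auto
  then show ?thesis by blast
qed

lemma beh_top:
  assumes fQ: "finite (nwa_Q N)"
  shows "wpa_beh (AN N b0) \<tau> = (\<Sum>q\<in>nwa_Q N. \<Sum>q'\<in>nwa_Q N.
     nwa_iota N q * (\<Sum>r \<in> Rset N b0 (st b0 1 q 0) (st b0 1 q' 0) \<tau>. wpa_wt (AN N b0) r) * nwa_kappa N q')"
proof -
  have lam: "alam N b0 (st b0 1 q 0) = nwa_iota N q" "agam N b0 (st b0 1 q 0) = nwa_kappa N q" if "q \<in> nwa_Q N" for q
    using that QS0[of N] by (simp_all add: alam_def agam_def st_in_Hs)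
  have "wpa_beh (AN N b0) \<tau> = (\<Sum>q1 \<in> Hs N True \<union> Hs N False. \<Sum>q2 \<in> Hs N True \<union> Hs N False.
       alam N b0 q1 * (\<Sum>r \<in> Rset N b0 q1 q2 \<tau>. wpa_wt (AN N b0) r) * agam N b0 q2)"
    unfolding wpa_beh_def Rset_def by simp
  also have "\<dots> = (\<Sum>q \<in> nwa_Q N. \<Sum>q2 \<in> Hs N True \<union> Hs N False.
       alam N b0 (st b0 1 q 0) * (\<Sum>r \<in> Rset N b0 (st b0 1 q 0) q2 \<tau>. wpa_wt (AN N b0) r) * agam N b0 q2)"
  proof (rule sum_top[OF fQ], goal_cases)
    case (1 x)
    then have "alam N b0 x = 0" using alam_nz by blast
    then show ?case by simp
  qed
  also have "\<dots> = (\<Sum>q \<in> nwa_Q N. \<Sum>q' \<in> nwa_Q N.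
       alam N b0 (st b0 1 q 0) * (\<Sum>r \<in> Rset N b0 (st b0 1 q 0) (st b0 1 q' 0) \<tau>. wpa_wt (AN N b0) r) * agam N b0 (st b0 1 q' 0))"
  proof -
    have ag0: "agam N b0 x = 0" if "x \<notin> (\<lambda>q. st b0 1 q 0) ` nwa_Q N" for x using agam_nz that by blast
    show ?thesis by (intro sum.cong refl sum_top[OF fQ]) (simp add: ag0)
  qed
  also have "\<dots> = (\<Sum>q\<in>nwa_Q N. \<Sum>q'\<in>nwa_Q N.
     nwa_iota N q * (\<Sum>r \<in> Rset N b0 (st b0 1 q 0) (st b0 1 q' 0) \<tau>. wpa_wt (AN N b0) r) * nwa_kappa N q')"
    by (intro sum.cong refl) (simp only: lam)
  finally show ?thesis .
qed

lemma main_eq: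
  assumes fQ: "finite (nwa_Q N)" and S: "\<forall>nw. is_nw nw \<longrightarrow> S nw = wnwa_beh N nw"
  shows "enc_series (phi b0) S \<tau> = wpa_beh (AN N b0) \<tau>"
proof (cases "\<exists>f0. f0 \<noteq> [] \<and> \<tau> = phit b0 f0")
  case False
  have "\<not> (\<exists>nw. is_nw nw \<and> phi b0 nw = \<tau>)"
  proof
    assume "\<exists>nw. is_nw nw \<and> phi b0 nw = \<tau>"
    then obtain nw where nw: "is_nw nw" "phi b0 nw = \<tau>" by blast
    obtain f where "f \<noteq> []" "fll f = nw" using fll_surj[OF nw(1)] by blast
    then show False using False nw phi_fll by blast
  qed
  then have "enc_series (phi b0) S \<tau> = 0" unfolding enc_series_def by (rule if_not_P)
  moreover have "wpa_beh (AN N b0) \<tau> = 0"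
  proof -
    have nb: "\<forall>f. f \<noteq> [] \<longrightarrow> \<tau> \<noteq> phit b0 f" using False by blast
    have z: "(\<Sum>r\<in>Rset N b0 (st b0 1 q 0) (st b0 1 q' 0) \<tau>. wpa_wt (AN N b0) r) = 0" for q q'
      by (rule Rsum_bad[OF nb])
    show ?thesis unfolding beh_top[OF fQ] z by simp
  qed
  ultimately show ?thesis by simp
next
  case True
  then obtain f0 where f0: "f0 \<noteq> []" "\<tau> = phit b0 f0" by blast
  have v0: "is_nw (fll f0)" "phi b0 (fll f0) = \<tau>" using is_nw_fll[OF f0(1)] phi_fll[OF f0(1)] f0(2) by auto
  have the: "(THE nw. is_nw nw \<and> phi b0 nw = \<tau>) = fll f0"
  proof (rule the_equality)
    show "is_nw (fll f0) \<and> phi b0 (fll f0) = \<tau>" using v0 by simp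
  next
    fix nw assume nw: "is_nw nw \<and> phi b0 nw = \<tau>"
    obtain f where f: "f \<noteq> []" "fll f = nw" using fll_surj nw by blast
    have "phit b0 f = phit b0 f0" using phi_fll[OF f(1)] f(2) nw f0(2) by simp
    then have "f = f0" by (rule phit_inj[OF f(1) f0(1)])
    then show "nw = fll f0" using f by simp
  qed
  have ex: "\<exists>nw. is_nw nw \<and> phi b0 nw = \<tau>" using v0 by blast
  have "enc_series (phi b0) S \<tau> = S (THE nw. is_nw nw \<and> phi b0 nw = \<tau>)"
    unfolding enc_series_def by (rule if_P[OF ex])
  also have "\<dots> = S (fll f0)" by (simp only: the)
  also have "\<dots> = wnwa_beh N (fll f0)" by (rule S[rule_format, OF v0(1)])
  also have "\<dots> = (\<Sum>qs \<in> {qs. length qs = Suc (lf f0) \<and> set qs \<subseteq> nwa_Q N}.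
       nwa_iota N (qs ! 0) * Wt N (fll f0) qs * nwa_kappa N (qs ! lf f0))"
    unfolding wnwa_beh_def Wt_def by (simp add: len_fl)
  also have "\<dots> = (\<Sum>q\<in>nwa_Q N. \<Sum>q'\<in>nwa_Q N. \<Sum>qs \<in> QSet N f0 q q'.
       nwa_iota N (qs ! 0) * Wt N (fll f0) qs * nwa_kappa N (qs ! lf f0))"
    unfolding regroup[OF fQ] QSet_def by simp
  also have "\<dots> = (\<Sum>q\<in>nwa_Q N. \<Sum>q'\<in>nwa_Q N. nwa_iota N q * (\<Sum>qs \<in> QSet N f0 q q'. Wt N (fll f0) qs) * nwa_kappa N q')"
    by (intro sum.cong refl) (simp add: QSet_def sum_distrib_left sum_distrib_right)
  also have "\<dots> = wpa_beh (AN N b0) \<tau>"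
    unfolding beh_top[OF fQ] Rsum_good[OF fQ f0] ..
  finally show ?thesis .
qed

end


theorem proposition5p8:
  fixes S :: "('d::finite) nword \<Rightarrow> 'k::comm_semiring_1"
  assumes "regular_nw_series S"
  shows "regular_txt_series (enc_series Phi_circ S) \<and> regular_txt_series (enc_series Phi_bul S)"
proof -
  obtain N :: "('d, 'k) wnwa" where ok: "wnwa_ok N" and S: "\<forall>nw. is_nw nw \<longrightarrow> S nw = wnwa_beh N nw"
    using assms unfolding regular_nw_series_def by blast
  have fQ: "finite (nwa_Q N)" using ok by (simp add: wnwa_ok_def)
  have R: "regular_txt_series (enc_series (phi b) S)" for b
    unfolding regular_txt_series_def
    by (rule exI[of _ "AA N b"]) (use wpa_ok_AA[OF fQ] main_eq[OF fQ S] in simp)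
  show ?thesis unfolding Phi_circ_def Phi_bul_def using R by blast
qed

end
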